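(* For every mixed graph $G$ without directed cycles, $\mathrm{nd}_{\mathrm m}(G^+)\le\mathrm{nd}_{\mathrm m}(G)$ and $\mathrm{cw}_{\mathrm m}(G^+)\le 4^{\mathrm{cw}_{\mathrm m}(G)}\cdot\mathrm{cw}_{\mathrm m}(G)$.
   Context: A mixed graph $G$ consists of a finite vertex set $V(G)$, a set $E(G)$ of undirected edges and a set $A(G)$ of directed arcs; it is simple and contains no directed cycle. The transitive closure $G^+$ is obtained by adding every arc $(u,v)$ such that $G$ has a directed path from $u$ to $v$, and removing any edge parallel to such an arc. $N^+(v)$, $N^-(v)$, $N^{\mathrm u}(v)$ denote out-, in- and undirected neighbors; $u,v$ have the same mixed type if $N^{\mathrm u}(u)\setminus\{v\}=N^{\mathrm u}(v)\setminus\{u\}$, $N^-(u)=N^-(v)$, $N^+(u)=N^+(v)$; $\mathrm{nd}_{\mathrm m}$ is the number of mixed types. The mixed cliquewidth $\mathrm{cw}_{\mathrm m}$ is the minimum number of labels needed to construct the graph using: create a new vertex with label $i$; disjoint union; $\eta_{i,j}$ ($i\ne j$): add an edge between every vertex labeled $i$ and every vertex labeled $j$; $\alpha_{i,j}$ ($i\ne j$): add an arc from every vertex labeled $i$ to every vertex labeled $j$; $\rho_{i\to j}$: rename label $i$ to $j$. *)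

theory Defs
  imports Main
begin

text \<open>A mixed graph is a triple (V, E, A): finite vertex set V, a symmetric
relation E of undirected edges (each undirected edge {u,v} is stored as both
(u,v) and (v,u)), and a relation A of directed arcs.\<close>

type_synonym 'a mgraph = "'a set \<times> ('a \<times> 'a) set \<times> ('a \<times> 'a) set"

definition verts :: "'a mgraph \<Rightarrow> 'a set" where "verts G = fst G"
definition edges :: "'a mgraph \<Rightarrow> ('a \<times> 'a) set" where "edges G = fst (snd G)"
definition arcs :: "'a mgraph \<Rightarrow> ('a \<times> 'a) set" where "arcs G = snd (snd G)"

definition acyclic_simple_mgraph :: "'a mgraph \<Rightarrow> bool" where
  "acyclic_simple_mgraph G \<longleftrightarrow>
     finite (verts G) \<and>
     edges G \<subseteq> verts G \<times> verts G \<and> arcs G \<subseteq> verts G \<times> verts G \<and>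
     sym (edges G) \<and> (\<forall>x. (x, x) \<notin> edges G) \<and>
     edges G \<inter> (arcs G \<union> (arcs G)\<inverse>) = {} \<and>
     acyclic (arcs G)"

definition mtrancl :: "'a mgraph \<Rightarrow> 'a mgraph" where
  "mtrancl G = (verts G,
                edges G - ((arcs G)\<^sup>+ \<union> ((arcs G)\<^sup>+)\<inverse>),
                (arcs G)\<^sup>+)"

definition Nu :: "'a mgraph \<Rightarrow> 'a \<Rightarrow> 'a set" where
  "Nu G v = {u. (v, u) \<in> edges G}"
definition Nout :: "'a mgraph \<Rightarrow> 'a \<Rightarrow> 'a set" where
  "Nout G v = {u. (v, u) \<in> arcs G}"
definition Nin :: "'a mgraph \<Rightarrow> 'a \<Rightarrow> 'a set" where
  "Nin G v = {u. (u, v) \<in> arcs G}"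

definition same_mixed_type :: "'a mgraph \<Rightarrow> 'a \<Rightarrow> 'a \<Rightarrow> bool" where
  "same_mixed_type G u v \<longleftrightarrow>
     Nu G u - {v} = Nu G v - {u} \<and> Nin G u = Nin G v \<and> Nout G u = Nout G v"

definition type_rel :: "'a mgraph \<Rightarrow> ('a \<times> 'a) set" where
  "type_rel G = {(u, v). u \<in> verts G \<and> v \<in> verts G \<and> same_mixed_type G u v}"

definition nd_m :: "'a mgraph \<Rightarrow> nat" where
  "nd_m G = card (verts G // type_rel G)"

datatype 'a cwexp =
    Vtx 'a nat
  | DUnion "'a cwexp" "'a cwexp"
  | Eta nat nat "'a cwexp"
  | Alpha nat nat "'a cwexp"
  | Rho nat nat "'a cwexp"

fun cw_eval :: "'a cwexp \<Rightarrow> 'a set \<times> ('a \<times> 'a) set \<times> ('a \<times> 'a) set \<times> ('a \<Rightarrow> nat)" where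
  "cw_eval (Vtx v i) = ({v}, {}, {}, (\<lambda>_. i))"
| "cw_eval (DUnion e1 e2) =
     (case cw_eval e1 of (V1, E1, A1, l1) \<Rightarrow>
      case cw_eval e2 of (V2, E2, A2, l2) \<Rightarrow>
        (V1 \<union> V2, E1 \<union> E2, A1 \<union> A2, (\<lambda>x. if x \<in> V1 then l1 x else l2 x)))"
| "cw_eval (Eta i j e) =
     (case cw_eval e of (V, E, A, l) \<Rightarrow>
        (V, E \<union> {(x, y). x \<in> V \<and> y \<in> V \<and>
                      ((l x = i \<and> l y = j) \<or> (l x = j \<and> l y = i))}, A, l))"
| "cw_eval (Alpha i j e) =
     (case cw_eval e of (V, E, A, l) \<Rightarrow>
        (V, E, A \<union> {(x, y). x \<in> V \<and> y \<in> V \<and> l x = i \<and> l y = j}, l))"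
| "cw_eval (Rho i j e) =
     (case cw_eval e of (V, E, A, l) \<Rightarrow>
        (V, E, A, (\<lambda>x. if l x = i then j else l x)))"

fun cw_wf :: "'a cwexp \<Rightarrow> bool" where
  "cw_wf (Vtx v i) = True"
| "cw_wf (DUnion e1 e2) = (cw_wf e1 \<and> cw_wf e2 \<and> fst (cw_eval e1) \<inter> fst (cw_eval e2) = {})"
| "cw_wf (Eta i j e) = (i \<noteq> j \<and> cw_wf e)"
| "cw_wf (Alpha i j e) = (i \<noteq> j \<and> cw_wf e)"
| "cw_wf (Rho i j e) = cw_wf e"

fun cw_labels :: "'a cwexp \<Rightarrow> nat set" where
  "cw_labels (Vtx v i) = {i}"
| "cw_labels (DUnion e1 e2) = cw_labels e1 \<union> cw_labels e2"
| "cw_labels (Eta i j e) = {i, j} \<union> cw_labels e"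
| "cw_labels (Alpha i j e) = {i, j} \<union> cw_labels e"
| "cw_labels (Rho i j e) = {i, j} \<union> cw_labels e"

definition cw_graph :: "'a cwexp \<Rightarrow> 'a mgraph" where
  "cw_graph e = (case cw_eval e of (V, E, A, l) \<Rightarrow> (V, E, A))"

definition cw_m :: "'a mgraph \<Rightarrow> nat" where
  "cw_m G = (LEAST k. \<exists>e. cw_wf e \<and> cw_labels e \<subseteq> {..<k} \<and> cw_graph e = G)"

end

theory Submission
  imports Defs
begin

definition evV :: "'a cwexp \<Rightarrow> 'a set" where "evV f = fst (cw_eval f)"
definition evE :: "'a cwexp \<Rightarrow> ('a\<times>'a) set" where "evE f = fst (snd (cw_eval f))"
definition evA :: "'a cwexp \<Rightarrow> ('a\<times>'a) set" where "evA f = fst (snd (snd (cw_eval f)))"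
definition evl :: "'a cwexp \<Rightarrow> 'a \<Rightarrow> nat" where "evl f = snd (snd (snd (cw_eval f)))"

lemma cw_eval_split: "cw_eval f = (evV f, evE f, evA f, evl f)"
  by (simp add: evV_def evE_def evA_def evl_def)

lemma ev_Vtx[simp]: "evV (Vtx v i) = {v}" "evE (Vtx v i) = {}" "evA (Vtx v i) = {}" "evl (Vtx v i) = (\<lambda>_. i)"
  by (simp_all add: evV_def evE_def evA_def evl_def)

lemma ev_DUnion[simp]:
  "evV (DUnion f g) = evV f \<union> evV g" "evE (DUnion f g) = evE f \<union> evE g"
  "evA (DUnion f g) = evA f \<union> evA g"
  "evl (DUnion f g) = (\<lambda>x. if x \<in> evV f then evl f x else evl g x)"
  by (simp_all add: evV_def[of "DUnion f g"] evE_def[of "DUnion f g"] evA_def[of "DUnion f g"] evl_def[of "DUnion f g"] cw_eval_split[of f] cw_eval_split[of g])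

lemma ev_Eta[simp]:
  "evV (Eta i j f) = evV f"
  "evE (Eta i j f) = evE f \<union> {(x, y). x \<in> evV f \<and> y \<in> evV f \<and>
                      ((evl f x = i \<and> evl f y = j) \<or> (evl f x = j \<and> evl f y = i))}"
  "evA (Eta i j f) = evA f"
  "evl (Eta i j f) = evl f"
  by (simp_all add: evV_def evE_def evA_def evl_def split: prod.split)

lemma ev_Alpha[simp]:
  "evV (Alpha i j f) = evV f"
  "evE (Alpha i j f) = evE f"
  "evA (Alpha i j f) = evA f \<union> {(x, y). x \<in> evV f \<and> y \<in> evV f \<and> evl f x = i \<and> evl f y = j}"
  "evl (Alpha i j f) = evl f"
  by (simp_all add: evV_def evE_def evA_def evl_def split: prod.split)

lemma ev_Rho[simp]:
  "evV (Rho i j f) = evV f"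
  "evE (Rho i j f) = evE f"
  "evA (Rho i j f) = evA f"
  "evl (Rho i j f) = (\<lambda>x. if evl f x = i then j else evl f x)"
  by (simp_all add: evV_def[of "Rho i j f"] evE_def[of "Rho i j f"] evA_def[of "Rho i j f"] evl_def[of "Rho i j f"] cw_eval_split[of f])

lemma ev_sub: "evE f \<subseteq> evV f \<times> evV f \<and> evA f \<subseteq> evV f \<times> evV f"
  by (induction f) auto

lemma evl_in_labels: "x \<in> evV f \<Longrightarrow> evl f x \<in> cw_labels f"
  by (induction f) auto

lemma cw_graph_ev: "cw_graph f = (evV f, evE f, evA f)"
  by (simp add: cw_graph_def cw_eval_split)


lemma fst_cw_eval[simp]: "fst (cw_eval f) = evV f"
  by (simp add: evV_def)



definition Mod :: "nat \<Rightarrow> 'a set \<Rightarrow> ('a\<times>'a) set \<Rightarrow> ('a\<times>'a) set \<Rightarrow> 'a cwexp \<Rightarrow> bool" where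
"Mod k V0 E0 A0 f \<longleftrightarrow> cw_wf f \<and> cw_labels f \<subseteq> {..<k} \<and> evV f \<subseteq> V0 \<and> evE f \<subseteq> E0 \<and> evA f \<subseteq> A0 \<and>
 (\<forall>u u' v v'. u\<in>evV f \<longrightarrow> u'\<in>evV f \<longrightarrow> v\<in>evV f \<longrightarrow> v'\<in>evV f \<longrightarrow> evl f u = evl f u' \<longrightarrow> evl f v = evl f v'
    \<longrightarrow> (u,v)\<in>A0 \<longrightarrow> (u,v)\<notin>evA f \<longrightarrow> (u',v')\<in>A0) \<and>
 (\<forall>u u' v v'. u\<in>evV f \<longrightarrow> u'\<in>evV f \<longrightarrow> v\<in>evV f \<longrightarrow> v'\<in>evV f \<longrightarrow> evl f u = evl f u' \<longrightarrow> evl f v = evl f v'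
    \<longrightarrow> (u,v)\<in>E0 \<longrightarrow> (u,v)\<notin>evE f \<longrightarrow> (u',v')\<in>E0) \<and>
 (\<forall>u u' z. u\<in>evV f \<longrightarrow> u'\<in>evV f \<longrightarrow> evl f u = evl f u' \<longrightarrow> z\<notin>evV f \<longrightarrow> (u,z)\<in>A0 \<longrightarrow> (u',z)\<in>A0) \<and>
 (\<forall>u u' z. u\<in>evV f \<longrightarrow> u'\<in>evV f \<longrightarrow> evl f u = evl f u' \<longrightarrow> z\<notin>evV f \<longrightarrow> (z,u)\<in>A0 \<longrightarrow> (z,u')\<in>A0)"

definition CF :: "'a cwexp \<Rightarrow> 'a cwexp \<Rightarrow> bool" where
"CF f g \<longleftrightarrow> cw_wf f \<and> cw_labels f \<subseteq> cw_labels g \<and> evV f \<subseteq> evV g \<and> evE f \<subseteq> evE g \<and> evA f \<subseteq> evA g \<and>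
 (\<forall>u u'. u\<in>evV f \<longrightarrow> u'\<in>evV f \<longrightarrow> evl f u = evl f u' \<longrightarrow> evl g u = evl g u') \<and>
 (\<forall>u u' v v'. u\<in>evV f \<longrightarrow> u'\<in>evV f \<longrightarrow> v\<in>evV f \<longrightarrow> v'\<in>evV f \<longrightarrow> evl f u = evl f u' \<longrightarrow> evl f v = evl f v'
    \<longrightarrow> (u,v)\<in>evA g \<longrightarrow> (u,v)\<notin>evA f \<longrightarrow> (u',v')\<in>evA g) \<and>
 (\<forall>u u' v v'. u\<in>evV f \<longrightarrow> u'\<in>evV f \<longrightarrow> v\<in>evV f \<longrightarrow> v'\<in>evV f \<longrightarrow> evl f u = evl f u' \<longrightarrow> evl f v = evl f v'
    \<longrightarrow> (u,v)\<in>evE g \<longrightarrow> (u,v)\<notin>evE f \<longrightarrow> (u',v')\<in>evE g) \<and>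
 (\<forall>u u' z. u\<in>evV f \<longrightarrow> u'\<in>evV f \<longrightarrow> evl f u = evl f u' \<longrightarrow> z\<in>evV g \<longrightarrow> z\<notin>evV f \<longrightarrow> (u,z)\<in>evA g \<longrightarrow> (u',z)\<in>evA g) \<and>
 (\<forall>u u' z. u\<in>evV f \<longrightarrow> u'\<in>evV f \<longrightarrow> evl f u = evl f u' \<longrightarrow> z\<in>evV g \<longrightarrow> z\<notin>evV f \<longrightarrow> (z,u)\<in>evA g \<longrightarrow> (z,u')\<in>evA g)"

lemma CFD:
  assumes C: "CF f g"
  shows c1: "cw_wf f" "cw_labels f \<subseteq> cw_labels g" "evV f \<subseteq> evV g" "evE f \<subseteq> evE g" "evA f \<subseteq> evA g"
    and cl: "\<And>u u'. u\<in>evV f \<Longrightarrow> u'\<in>evV f \<Longrightarrow> evl f u = evl f u' \<Longrightarrow> evl g u = evl g u'"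
    and cA: "\<And>u u' v v'. u\<in>evV f \<Longrightarrow> u'\<in>evV f \<Longrightarrow> v\<in>evV f \<Longrightarrow> v'\<in>evV f \<Longrightarrow> evl f u = evl f u' \<Longrightarrow> evl f v = evl f v'
    \<Longrightarrow> (u,v)\<in>evA g \<Longrightarrow> (u,v)\<notin>evA f \<Longrightarrow> (u',v')\<in>evA g"
    and cE: "\<And>u u' v v'. u\<in>evV f \<Longrightarrow> u'\<in>evV f \<Longrightarrow> v\<in>evV f \<Longrightarrow> v'\<in>evV f \<Longrightarrow> evl f u = evl f u' \<Longrightarrow> evl f v = evl f v'
    \<Longrightarrow> (u,v)\<in>evE g \<Longrightarrow> (u,v)\<notin>evE f \<Longrightarrow> (u',v')\<in>evE g"
    and cO: "\<And>u u' z. u\<in>evV f \<Longrightarrow> u'\<in>evV f \<Longrightarrow> evl f u = evl f u' \<Longrightarrow> z\<in>evV g \<Longrightarrow> z\<notin>evV f \<Longrightarrow> (u,z)\<in>evA g \<Longrightarrow> (u',z)\<in>evA g"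
    and cI: "\<And>u u' z. u\<in>evV f \<Longrightarrow> u'\<in>evV f \<Longrightarrow> evl f u = evl f u' \<Longrightarrow> z\<in>evV g \<Longrightarrow> z\<notin>evV f \<Longrightarrow> (z,u)\<in>evA g \<Longrightarrow> (z,u')\<in>evA g"
  using C unfolding CF_def apply -
  apply (elim conjE, assumption)+
  apply (elim conjE, blast)+
  done

lemma ModD:
  assumes M: "Mod k V0 E0 A0 g"
  shows m1: "cw_wf g" "cw_labels g \<subseteq> {..<k}" "evV g \<subseteq> V0" "evE g \<subseteq> E0" "evA g \<subseteq> A0"
    and mA: "\<And>u u' v v'. u\<in>evV g \<Longrightarrow> u'\<in>evV g \<Longrightarrow> v\<in>evV g \<Longrightarrow> v'\<in>evV g \<Longrightarrow> evl g u = evl g u' \<Longrightarrow> evl g v = evl g v'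
    \<Longrightarrow> (u,v)\<in>A0 \<Longrightarrow> (u,v)\<notin>evA g \<Longrightarrow> (u',v')\<in>A0"
    and mE: "\<And>u u' v v'. u\<in>evV g \<Longrightarrow> u'\<in>evV g \<Longrightarrow> v\<in>evV g \<Longrightarrow> v'\<in>evV g \<Longrightarrow> evl g u = evl g u' \<Longrightarrow> evl g v = evl g v'
    \<Longrightarrow> (u,v)\<in>E0 \<Longrightarrow> (u,v)\<notin>evE g \<Longrightarrow> (u',v')\<in>E0"
    and mO: "\<And>u u' z. u\<in>evV g \<Longrightarrow> u'\<in>evV g \<Longrightarrow> evl g u = evl g u' \<Longrightarrow> z\<notin>evV g \<Longrightarrow> (u,z)\<in>A0 \<Longrightarrow> (u',z)\<in>A0"
    and mI: "\<And>u u' z. u\<in>evV g \<Longrightarrow> u'\<in>evV g \<Longrightarrow> evl g u = evl g u' \<Longrightarrow> z\<notin>evV g \<Longrightarrow> (z,u)\<in>A0 \<Longrightarrow> (z,u')\<in>A0"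
  using M unfolding Mod_def apply -
  apply (elim conjE, assumption)+
  apply (elim conjE, blast)+
  done

lemma Mod_child:
  assumes M: "Mod k V0 E0 A0 g" and C: "CF f g"
  shows "Mod k V0 E0 A0 f"
proof -
  note c1 = CFD(1-5)[OF C] and cl = CFD(6)[OF C] and cA = CFD(7)[OF C] and cE = CFD(8)[OF C]
    and cO = CFD(9)[OF C] and cI = CFD(10)[OF C]
  note m1 = ModD(2-5)[OF M] and mA = ModD(6)[OF M] and mE = ModD(7)[OF M] and mO = ModD(8)[OF M] and mI = ModD(9)[OF M]
  show ?thesis unfolding Mod_def
  proof (intro conjI allI impI)
    show "cw_wf f" by (rule c1)
    show "cw_labels f \<subseteq> {..<k}" using c1 m1 by blast
    show "evV f \<subseteq> V0" "evE f \<subseteq> E0" "evA f \<subseteq> A0" using c1 m1 by blast+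
  next
    fix u u' v v' assume h: "u\<in>evV f" "u'\<in>evV f" "v\<in>evV f" "v'\<in>evV f" "evl f u = evl f u'" "evl f v = evl f v'"
      "(u,v)\<in>A0" "(u,v)\<notin>evA f"
    show "(u',v')\<in>A0"
    proof (cases "(u,v)\<in>evA g")
      case True then show ?thesis using cA[OF h(1-6) True h(8)] m1 by blast
    next
      case False then show ?thesis using mA[of u u' v v'] h cl c1 by blast
    qed
  next
    fix u u' v v' assume h: "u\<in>evV f" "u'\<in>evV f" "v\<in>evV f" "v'\<in>evV f" "evl f u = evl f u'" "evl f v = evl f v'"
      "(u,v)\<in>E0" "(u,v)\<notin>evE f"
    show "(u',v')\<in>E0"
    proof (cases "(u,v)\<in>evE g")
      case True then show ?thesis using cE[OF h(1-6) True h(8)] m1 by blast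
    next
      case False then show ?thesis using mE[of u u' v v'] h cl c1 by blast
    qed
  next
    fix u u' z assume h: "u\<in>evV f" "u'\<in>evV f" "evl f u = evl f u'" "z\<notin>evV f" "(u,z)\<in>A0"
    show "(u',z)\<in>A0"
    proof (cases "z \<in> evV g")
      case True
      show ?thesis
      proof (cases "(u,z)\<in>evA g")
        case True2: True then show ?thesis using cO[OF h(1-3) True h(4)] m1 by blast
      next
        case False then show ?thesis using mA[of u u' z z] h cl c1 True by blast
      qed
    next
      case False then show ?thesis using mO[of u u' z] h cl c1 by blast
    qed
  next
    fix u u' z assume h: "u\<in>evV f" "u'\<in>evV f" "evl f u = evl f u'" "z\<notin>evV f" "(z,u)\<in>A0"
    show "(z,u')\<in>A0"
    proof (cases "z \<in> evV g")
      case True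
      show ?thesis
      proof (cases "(z,u)\<in>evA g")
        case True2: True then show ?thesis using cI[OF h(1-3) True h(4)] m1 by blast
      next
        case False then show ?thesis using mA[of z z u u'] h cl c1 True by blast
      qed
    next
      case False then show ?thesis using mI[of u u' z] h cl c1 by blast
    qed
  qed
qed

lemma CF_Eta: "cw_wf (Eta i j f) \<Longrightarrow> CF f (Eta i j f)"
  unfolding CF_def by (intro conjI allI impI; simp; blast)
lemma CF_Alpha: "cw_wf (Alpha i j f) \<Longrightarrow> CF f (Alpha i j f)"
  unfolding CF_def by (intro conjI allI impI; simp; blast)
lemma CF_Rho: "cw_wf (Rho i j f) \<Longrightarrow> CF f (Rho i j f)"
  unfolding CF_def by (intro conjI allI impI; auto)
lemma Mod_root: "cw_wf e \<Longrightarrow> cw_labels e \<subseteq> {..<k} \<Longrightarrow> Mod k (evV e) (evE e) (evA e) e"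
  unfolding Mod_def using ev_sub[of e] by (intro conjI allI impI; simp; blast)


lemma CF_DUnion1: assumes "cw_wf (DUnion f g)" shows "CF f (DUnion f g)"
proof -
  have d: "evV f \<inter> evV g = {}" "cw_wf f" using assms by auto
  have s: "\<And>u v. (u,v) \<in> evA f \<Longrightarrow> u \<in> evV f \<and> v \<in> evV f" "\<And>u v. (u,v) \<in> evA g \<Longrightarrow> u \<in> evV g \<and> v \<in> evV g"
     "\<And>u v. (u,v) \<in> evE g \<Longrightarrow> u \<in> evV g \<and> v \<in> evV g"
    using ev_sub[of f] ev_sub[of g] by auto
  show ?thesis unfolding CF_def ev_DUnion
  proof (intro conjI allI impI)
    fix u u' v v' assume "u \<in> evV f" "v \<in> evV f" "(u, v) \<in> evA f \<union> evA g" "(u, v) \<notin> evA f"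
    then show "(u', v') \<in> evA f \<union> evA g" using s(2) d by blast
  next
    fix u u' v v' assume "u \<in> evV f" "v \<in> evV f" "(u, v) \<in> evE f \<union> evE g" "(u, v) \<notin> evE f"
    then show "(u', v') \<in> evE f \<union> evE g" using s(3) d by blast
  next
    fix u u' z assume "u \<in> evV f" "z \<notin> evV f" "(u, z) \<in> evA f \<union> evA g"
    then show "(u', z) \<in> evA f \<union> evA g" using s(1,2) d by blast
  next
    fix u u' z assume "u \<in> evV f" "z \<notin> evV f" "(z, u) \<in> evA f \<union> evA g"
    then show "(z, u') \<in> evA f \<union> evA g" using s(1,2) d by blast
  qed (use d in auto)
qed

lemma CF_DUnion2: assumes "cw_wf (DUnion f g)" shows "CF g (DUnion f g)"
proof -
  have d: "evV f \<inter> evV g = {}" "cw_wf g" using assms by auto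
  have s: "\<And>u v. (u,v) \<in> evA f \<Longrightarrow> u \<in> evV f \<and> v \<in> evV f" "\<And>u v. (u,v) \<in> evA g \<Longrightarrow> u \<in> evV g \<and> v \<in> evV g"
     "\<And>u v. (u,v) \<in> evE f \<Longrightarrow> u \<in> evV f \<and> v \<in> evV f"
    using ev_sub[of f] ev_sub[of g] by auto
  show ?thesis unfolding CF_def ev_DUnion
  proof (intro conjI allI impI)
    fix u u' v v' assume "u \<in> evV g" "v \<in> evV g" "(u, v) \<in> evA f \<union> evA g" "(u, v) \<notin> evA g"
    then show "(u', v') \<in> evA f \<union> evA g" using s(1) d by blast
  next
    fix u u' v v' assume "u \<in> evV g" "v \<in> evV g" "(u, v) \<in> evE f \<union> evE g" "(u, v) \<notin> evE g"
    then show "(u', v') \<in> evE f \<union> evE g" using s(3) d by blast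
  next
    fix u u' z assume "u \<in> evV g" "z \<notin> evV g" "(u, z) \<in> evA f \<union> evA g"
    then show "(u', z) \<in> evA f \<union> evA g" using s(1,2) d by blast
  next
    fix u u' z assume "u \<in> evV g" "z \<notin> evV g" "(z, u) \<in> evA f \<union> evA g"
    then show "(z, u') \<in> evA f \<union> evA g" using s(1,2) d by blast
  next
    fix u u' assume "u \<in> evV g" "u' \<in> evV g" "evl g u = evl g u'"
    then show "(if u \<in> evV f then evl f u else evl g u) = (if u' \<in> evV f then evl f u' else evl g u')"
      using d by auto
  qed (use d in auto)
qed

lemma decomp_first:
  "(x,y) \<in> A0\<^sup>+ \<Longrightarrow> (x,y)\<in>A\<^sup>+ \<or> (\<exists>p q. (x,p)\<in>A\<^sup>* \<and> (p,q)\<in>A0 \<and> (p,q)\<notin>A \<and> (q,y)\<in>A0\<^sup>*)"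
proof (induction rule: trancl_induct)
  case (base y)
  then show ?case by blast
next
  case (step y z)
  from step.IH show ?case
  proof
    assume a: "(x,y)\<in>A\<^sup>+"
    show ?thesis
    proof (cases "(y,z)\<in>A")
      case True then show ?thesis using a by (meson trancl.trancl_into_trancl)
    next
      case False then show ?thesis using a step.hyps(2) by (meson trancl_into_rtrancl rtrancl.rtrancl_refl)
    qed
  next
    assume "\<exists>p q. (x,p)\<in>A\<^sup>* \<and> (p,q)\<in>A0 \<and> (p,q)\<notin>A \<and> (q,y)\<in>A0\<^sup>*"
    then show ?thesis using step.hyps(2) by (meson rtrancl.rtrancl_into_rtrancl)
  qed
qed

lemma decomp_last:
  "(q,y) \<in> A0\<^sup>* \<Longrightarrow> (q,y)\<in>A\<^sup>* \<or> (\<exists>r s. (q,r)\<in>A0\<^sup>* \<and> (r,s)\<in>A0 \<and> (r,s)\<notin>A \<and> (s,y)\<in>A\<^sup>*)"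
proof (induction rule: rtrancl_induct)
  case base
  then show ?case by blast
next
  case (step y z)
  show ?case
  proof (cases "(y,z)\<in>A")
    case True
    from step.IH show ?thesis
    proof
      assume "(q,y)\<in>A\<^sup>*" then show ?thesis using True by (meson rtrancl.rtrancl_into_rtrancl)
    next
      assume "\<exists>r s. (q,r)\<in>A0\<^sup>* \<and> (r,s)\<in>A0 \<and> (r,s)\<notin>A \<and> (s,y)\<in>A\<^sup>*"
      then show ?thesis using True by (meson rtrancl.rtrancl_into_rtrancl)
    qed
  next
    case False then show ?thesis using step.hyps by blast
  qed
qed

lemma rtrancl_closed: "(x,p)\<in>A\<^sup>* \<Longrightarrow> A \<subseteq> V \<times> V \<Longrightarrow> x \<in> V \<Longrightarrow> p \<in> V"
  by (induction rule: rtrancl_induct) auto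

lemma rtrancl_closed_conv: "(p,y)\<in>A\<^sup>* \<Longrightarrow> A \<subseteq> V \<times> V \<Longrightarrow> y \<in> V \<Longrightarrow> p \<in> V"
  by (induction rule: converse_rtrancl_induct) auto

definition Oset :: "('a\<times>'a) set \<Rightarrow> ('a \<Rightarrow> nat) \<Rightarrow> 'a \<Rightarrow> nat set" where
  "Oset A l u = l ` (A\<^sup>* `` {u})"

lemma Oset_conv_mem: "c \<in> Oset (A\<inverse>) l y \<longleftrightarrow> (\<exists>q. (q,y)\<in>A\<^sup>* \<and> l q = c)"
  unfolding Oset_def by (auto simp: rtrancl_converse)

lemma Oset_mem: "c \<in> Oset A l x \<longleftrightarrow> (\<exists>p. (x,p)\<in>A\<^sup>* \<and> l p = c)"
  unfolding Oset_def by auto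

lemma reach_det:
  assumes M: "Mod k V0 E0 A0 s"
    and xs: "x \<in> evV s" "y \<in> evV s" "x' \<in> evV s" "y' \<in> evV s"
    and eO: "Oset (evA s) (evl s) x = Oset (evA s) (evl s) x'"
    and eI: "Oset ((evA s)\<inverse>) (evl s) y = Oset ((evA s)\<inverse>) (evl s) y'"
    and r: "(x,y)\<in>A0\<^sup>+" and nr: "(x,y)\<notin>(evA s)\<^sup>+"
  shows "(x',y')\<in>A0\<^sup>+"
proof -
  let ?A = "evA s" let ?l = "evl s" let ?V = "evV s"
  have AV: "?A \<subseteq> ?V \<times> ?V" using ev_sub[of s] by blast
  have AA0: "?A \<subseteq> A0" using ModD(5)[OF M] .
  have st: "?A\<^sup>* \<subseteq> A0\<^sup>*" using AA0 by (rule rtrancl_mono)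
  note mA = ModD(6)[OF M] and mO = ModD(8)[OF M] and mI = ModD(9)[OF M]
  from decomp_first[OF r, of ?A] nr obtain p q where
    pq: "(x,p)\<in>?A\<^sup>*" "(p,q)\<in>A0" "(p,q)\<notin>?A" "(q,y)\<in>A0\<^sup>*" by blast
  have pV: "p \<in> ?V" using rtrancl_closed[OF pq(1) AV xs(1)] .
  have "?l p \<in> Oset ?A ?l x'" using eO pq(1) unfolding Oset_mem[symmetric] by (metis Oset_mem)
  then obtain p' where p': "(x',p')\<in>?A\<^sup>*" "?l p' = ?l p" unfolding Oset_mem by blast
  have p'V: "p' \<in> ?V" using rtrancl_closed[OF p'(1) AV xs(3)] .
  from decomp_last[OF pq(4), of ?A] show ?thesis
  proof
    assume qy: "(q,y)\<in>?A\<^sup>*"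
    have qV: "q \<in> ?V" using rtrancl_closed_conv[OF qy AV xs(2)] .
    have "?l q \<in> Oset (?A\<inverse>) ?l y'" using eI qy unfolding Oset_conv_mem[symmetric] by (metis Oset_conv_mem)
    then obtain q' where q': "(q',y')\<in>?A\<^sup>*" "?l q' = ?l q" unfolding Oset_conv_mem by blast
    have q'V: "q' \<in> ?V" using rtrancl_closed_conv[OF q'(1) AV xs(4)] .
    have "(p',q')\<in>A0" using mA[OF pV p'V qV q'V p'(2)[symmetric] q'(2)[symmetric] pq(2) pq(3)] .
    moreover have "(x',p')\<in>A0\<^sup>*" "(q',y')\<in>A0\<^sup>*" using p'(1) q'(1) st by blast+
    ultimately have "(x',q')\<in>A0\<^sup>+" "(q', y') \<in> A0\<^sup>*" by (meson rtrancl_into_trancl1)+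
    then show ?thesis by (meson trancl_rtrancl_trancl)
  next
    assume "\<exists>r s'. (q,r)\<in>A0\<^sup>* \<and> (r,s')\<in>A0 \<and> (r,s')\<notin>?A \<and> (s',y)\<in>?A\<^sup>*"
    then obtain r w where rw: "(q,r)\<in>A0\<^sup>*" "(r,w)\<in>A0" "(r,w)\<notin>?A" "(w,y)\<in>?A\<^sup>*" by blast
    have wV: "w \<in> ?V" using rtrancl_closed_conv[OF rw(4) AV xs(2)] .
    have "?l w \<in> Oset (?A\<inverse>) ?l y'" using eI rw(4) unfolding Oset_conv_mem[symmetric] by (metis Oset_conv_mem)
    then obtain w' where w': "(w',y')\<in>?A\<^sup>*" "?l w' = ?l w" unfolding Oset_conv_mem by blast
    have w'V: "w' \<in> ?V" using rtrancl_closed_conv[OF w'(1) AV xs(4)] .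
    have pq': "(p',q)\<in>A0"
    proof (cases "q \<in> ?V")
      case True show ?thesis using mA[OF pV p'V True True p'(2)[symmetric] refl pq(2) pq(3)] .
    next
      case False show ?thesis using mO[OF pV p'V p'(2)[symmetric] False pq(2)] .
    qed
    have rw': "(r,w')\<in>A0"
    proof (cases "r \<in> ?V")
      case True show ?thesis using mA[OF True True wV w'V refl w'(2)[symmetric] rw(2) rw(3)] .
    next
      case False show ?thesis using mI[OF wV w'V w'(2)[symmetric] False rw(2)] .
    qed
    have a: "(x',p')\<in>A0\<^sup>*" "(w',y')\<in>A0\<^sup>*" using p'(1) w'(1) st by blast+
    have "(x',q)\<in>A0\<^sup>+" using a(1) pq' by (meson rtrancl_into_trancl1)
    then have "(x',r)\<in>A0\<^sup>+" using rw(1) by (meson trancl_rtrancl_trancl)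
    then have "(x',w')\<in>A0\<^sup>+" using rw' by (meson trancl.trancl_into_trancl)
    then show ?thesis using a(2) by (meson trancl_rtrancl_trancl)
  qed
qed


type_synonym ty = "nat \<times> nat set \<times> nat set"

definition tau :: "'a cwexp \<Rightarrow> 'a \<Rightarrow> ty" where
  "tau f u = (evl f u, Oset (evA f) (evl f) u, Oset ((evA f)\<inverse>) (evl f) u)"

lemma tau_Eta: "tau (Eta i j f) u = tau f u"
  by (simp add: tau_def)

lemma Oset_ren: "Oset A (\<lambda>x. if l x = i then j else l x) u = (\<lambda>c. if c = i then j else c) ` Oset A l u"
  unfolding Oset_def by (simp only: image_image)

lemma tau_Rho: "tau f u = tau f u' \<Longrightarrow> tau (Rho i j f) u = tau (Rho i j f) u'"
  by (simp add: tau_def Oset_ren)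

lemma union_block_reach:
  "(u,z)\<in>(A \<union> {(x,y). x\<in>V \<and> y\<in>V \<and> l x = i \<and> l y = j})\<^sup>* \<longleftrightarrow>
   (u,z)\<in>A\<^sup>* \<or> ((\<exists>p\<in>V. (u,p)\<in>A\<^sup>* \<and> l p = i) \<and> (\<exists>q\<in>V. l q = j \<and> (q,z)\<in>A\<^sup>*))"
  (is "?L \<longleftrightarrow> ?R")
proof
  let ?B = "{(x,y). x\<in>V \<and> y\<in>V \<and> l x = i \<and> l y = j}"
  assume ?L then show ?R
  proof (induction rule: rtrancl_induct)
    case base then show ?case by blast
  next
    case (step y z)
    from step.hyps(2) show ?case
    proof
      assume yz: "(y,z)\<in>A"
      from step.IH show ?thesis
      proof
        assume "(u,y)\<in>A\<^sup>*" then show ?thesis using yz by (meson rtrancl.rtrancl_into_rtrancl)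
      next
        assume "(\<exists>p\<in>V. (u,p)\<in>A\<^sup>* \<and> l p = i) \<and> (\<exists>q\<in>V. l q = j \<and> (q,y)\<in>A\<^sup>*)"
        then show ?thesis using yz by (meson rtrancl.rtrancl_into_rtrancl)
      qed
    next
      assume yz: "(y,z)\<in>?B"
      from step.IH show ?thesis
      proof
        assume "(u,y)\<in>A\<^sup>*" then show ?thesis using yz by blast
      next
        assume "(\<exists>p\<in>V. (u,p)\<in>A\<^sup>* \<and> l p = i) \<and> (\<exists>q\<in>V. l q = j \<and> (q,y)\<in>A\<^sup>*)"
        then show ?thesis using yz by blast
      qed
    qed
  qed
next
  let ?B = "{(x,y). x\<in>V \<and> y\<in>V \<and> l x = i \<and> l y = j}"
  have sub: "A\<^sup>* \<subseteq> (A \<union> ?B)\<^sup>*" by (rule rtrancl_mono) blast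
  assume ?R then show ?L
  proof
    assume "(u,z)\<in>A\<^sup>*" then show ?L using sub by blast
  next
    assume "(\<exists>p\<in>V. (u,p)\<in>A\<^sup>* \<and> l p = i) \<and> (\<exists>q\<in>V. l q = j \<and> (q,z)\<in>A\<^sup>*)"
    then obtain p q where pq: "p\<in>V" "(u,p)\<in>A\<^sup>*" "l p = i" "q\<in>V" "l q = j" "(q,z)\<in>A\<^sup>*" by blast
    have "(p,q)\<in>(A \<union> ?B)\<^sup>*" using pq by blast
    moreover have "(u,p)\<in>(A \<union> ?B)\<^sup>*" "(q,z)\<in>(A \<union> ?B)\<^sup>*" using pq sub by blast+
    ultimately show ?L by (meson rtrancl_trans)
  qed
qed

lemma Oset_alpha:
  assumes AV: "A \<subseteq> V \<times> V" and u: "u \<in> V"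
  shows "Oset (A \<union> {(x,y). x\<in>V \<and> y\<in>V \<and> l x = i \<and> l y = j}) l u =
         Oset A l u \<union> (if i \<in> Oset A l u then l ` {z. \<exists>q\<in>V. l q = j \<and> (q,z)\<in>A\<^sup>*} else {})"
proof -
  let ?B = "{(x,y). x\<in>V \<and> y\<in>V \<and> l x = i \<and> l y = j}"
  have e: "(\<exists>p\<in>V. (u,p)\<in>A\<^sup>* \<and> l p = i) \<longleftrightarrow> i \<in> Oset A l u"
  proof
    assume "i \<in> Oset A l u"
    then obtain p where p: "(u,p)\<in>A\<^sup>*" "l p = i" unfolding Oset_mem by blast
    have "p \<in> V" using rtrancl_closed[OF p(1) AV u] .
    then show "\<exists>p\<in>V. (u,p)\<in>A\<^sup>* \<and> l p = i" using p by blast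
  qed (auto simp: Oset_mem)
  show ?thesis
  proof (cases "i \<in> Oset A l u")
    case True
    have S: "(A \<union> ?B)\<^sup>* `` {u} = A\<^sup>* `` {u} \<union> {z. \<exists>q\<in>V. l q = j \<and> (q,z)\<in>A\<^sup>*}"
    proof (rule set_eqI)
      fix z show "z \<in> (A \<union> ?B)\<^sup>* `` {u} \<longleftrightarrow> z \<in> A\<^sup>* `` {u} \<union> {z. \<exists>q\<in>V. l q = j \<and> (q,z)\<in>A\<^sup>*}"
        using union_block_reach[of u z A V l i j] e True by simp
    qed
    show ?thesis using True unfolding Oset_def[of "A \<union> ?B"] S image_Un by (simp add: Oset_def)
  next
    case False
    have S: "(A \<union> ?B)\<^sup>* `` {u} = A\<^sup>* `` {u}"
    proof (rule set_eqI)
      fix z show "z \<in> (A \<union> ?B)\<^sup>* `` {u} \<longleftrightarrow> z \<in> A\<^sup>* `` {u}"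
        using union_block_reach[of u z A V l i j] e False by simp
    qed
    show ?thesis using False unfolding Oset_def[of "A \<union> ?B"] S by (simp add: Oset_def)
  qed
qed

lemma conv_block: "(A \<union> {(x,y). x\<in>V \<and> y\<in>V \<and> l x = i \<and> l y = j})\<inverse> = A\<inverse> \<union> {(x,y). x\<in>V \<and> y\<in>V \<and> l x = j \<and> l y = i}"
  by auto

lemma tau_Alpha:
  assumes "u \<in> evV f" "u' \<in> evV f" "tau f u = tau f u'"
  shows "tau (Alpha i j f) u = tau (Alpha i j f) u'"
proof -
  have AV: "evA f \<subseteq> evV f \<times> evV f" "(evA f)\<inverse> \<subseteq> evV f \<times> evV f" using ev_sub[of f] by auto
  have 1: "Oset (evA (Alpha i j f)) (evl (Alpha i j f)) w = Oset (evA f) (evl f) w \<union>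
     (if i \<in> Oset (evA f) (evl f) w then evl f ` {z. \<exists>q\<in>evV f. evl f q = j \<and> (q,z)\<in>(evA f)\<^sup>*} else {})"
    if "w \<in> evV f" for w
    unfolding ev_Alpha by (rule Oset_alpha[OF AV(1) that])
  have 2: "Oset ((evA (Alpha i j f))\<inverse>) (evl (Alpha i j f)) w = Oset ((evA f)\<inverse>) (evl f) w \<union>
     (if j \<in> Oset ((evA f)\<inverse>) (evl f) w then evl f ` {z. \<exists>q\<in>evV f. evl f q = i \<and> (q,z)\<in>((evA f)\<inverse>)\<^sup>*} else {})"
    if "w \<in> evV f" for w
    unfolding ev_Alpha conv_block by (rule Oset_alpha[OF AV(2) that])
  have e: "evl f u = evl f u'" "Oset (evA f) (evl f) u = Oset (evA f) (evl f) u'"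
    "Oset ((evA f)\<inverse>) (evl f) u = Oset ((evA f)\<inverse>) (evl f) u'"
    using assms(3) unfolding tau_def by simp_all
  show ?thesis unfolding tau_def 1[OF assms(1)] 1[OF assms(2)] 2[OF assms(1)] 2[OF assms(2)]
    using e by simp
qed

definition Tset :: "nat \<Rightarrow> ty set" where
  "Tset k = {(a,Ou,In). a < k \<and> Ou \<subseteq> {..<k} \<and> In \<subseteq> {..<k} \<and> a \<in> Ou \<and> a \<in> In}"

lemma tau_in_Tset:
  assumes "cw_labels f \<subseteq> {..<k}" "u \<in> evV f"
  shows "tau f u \<in> Tset k"
proof -
  have AV: "evA f \<subseteq> evV f \<times> evV f" "(evA f)\<inverse> \<subseteq> evV f \<times> evV f" using ev_sub[of f] by auto
  have lk: "\<And>x. x \<in> evV f \<Longrightarrow> evl f x < k" using evl_in_labels assms(1) by (meson subsetD lessThan_iff)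
  have "Oset (evA f) (evl f) u \<subseteq> {..<k}"
  proof
    fix c assume "c \<in> Oset (evA f) (evl f) u"
    then obtain p where p: "(u,p) \<in> (evA f)\<^sup>*" "c = evl f p" unfolding Oset_mem by blast
    have "p \<in> evV f" using rtrancl_closed[OF p(1) AV(1) assms(2)] .
    then show "c \<in> {..<k}" using lk p(2) by simp
  qed
  moreover have "Oset ((evA f)\<inverse>) (evl f) u \<subseteq> {..<k}"
  proof
    fix c assume "c \<in> Oset ((evA f)\<inverse>) (evl f) u"
    then obtain p where p: "(u,p) \<in> ((evA f)\<inverse>)\<^sup>*" "c = evl f p" unfolding Oset_mem by blast
    have "p \<in> evV f" using rtrancl_closed[OF p(1) AV(2) assms(2)] .
    then show "c \<in> {..<k}" using lk p(2) by simp
  qed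
  moreover have "evl f u \<in> Oset (evA f) (evl f) u" "evl f u \<in> Oset ((evA f)\<inverse>) (evl f) u"
    unfolding Oset_mem by blast+
  ultimately show ?thesis unfolding Tset_def tau_def using lk[OF assms(2)] by blast
qed

lemma card_Pa: "a < k \<Longrightarrow> card {Ou. Ou \<subseteq> {..<k::nat} \<and> a \<in> Ou} = 2 ^ (k - 1)"
proof -
  assume a: "a < k"
  have "{Ou. Ou \<subseteq> {..<k::nat} \<and> a \<in> Ou} = insert a ` Pow ({..<k} - {a})" (is "?S = _")
  proof
    show "?S \<subseteq> insert a ` Pow ({..<k} - {a})"
    proof
      fix Ou assume "Ou \<in> ?S"
      then have "Ou = insert a (Ou - {a})" "Ou - {a} \<in> Pow ({..<k} - {a})" by auto
      then show "Ou \<in> insert a ` Pow ({..<k} - {a})" by blast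
    qed
  qed (use a in auto)
  moreover have "inj_on (insert a) (Pow ({..<k} - {a}))"
  proof (rule inj_onI)
    fix X Y assume XY: "X \<in> Pow ({..<k} - {a})" "Y \<in> Pow ({..<k} - {a})" "insert a X = insert a Y"
    then have "a \<notin> X" "a \<notin> Y" by auto
    then have "X = insert a X - {a}" "Y = insert a Y - {a}" by auto
    then show "X = Y" using XY(3) by simp
  qed
  ultimately have "card ?S = card (Pow ({..<k} - {a}))" by (simp add: card_image)
  also have "\<dots> = 2 ^ (k - 1)" using a by (simp add: card_Pow)
  finally show ?thesis .
qed

lemma Tset_eq: "Tset k = (SIGMA a:{..<k}. {Ou. Ou \<subseteq> {..<k} \<and> a \<in> Ou} \<times> {In. In \<subseteq> {..<k} \<and> a \<in> In})"
  unfolding Tset_def by auto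

lemma finite_Tset: "finite (Tset k)"
  unfolding Tset_eq by (intro finite_SigmaI finite_cartesian_product) auto

lemma card_Tset: "card (Tset k) = k * 4 ^ (k - 1)"
proof -
  have "card (Tset k) = (\<Sum>a<k. card ({Ou. Ou \<subseteq> {..<k} \<and> a \<in> Ou} \<times> {In. In \<subseteq> {..<k} \<and> a \<in> In}))"
    unfolding Tset_eq by (rule card_SigmaI) auto
  also have "\<dots> = (\<Sum>a<k. 2 ^ (k - 1) * 2 ^ (k - 1))"
    by (rule sum.cong) (auto simp: card_cartesian_product card_Pa)
  also have "\<dots> = k * 4 ^ (k - 1)" by (simp add: power_mult_distrib[symmetric])
  finally show ?thesis .
qed

lemma card_Tset_bound: "2 * card (Tset k) \<le> 4 ^ k * k"
proof (cases k)
  case 0 then show ?thesis by (simp add: card_Tset)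
next
  case (Suc n) then show ?thesis by (simp add: card_Tset)
qed


fun ren :: "(nat\<times>nat) list \<Rightarrow> nat \<Rightarrow> nat" where
  "ren [] c = c"
| "ren ((i,j)#L) c = (if ren L c = i then j else ren L c)"

fun rhos :: "(nat\<times>nat) list \<Rightarrow> 'a cwexp \<Rightarrow> 'a cwexp" where
  "rhos [] X = X"
| "rhos ((i,j)#L) X = Rho i j (rhos L X)"

lemma ev_rhos[simp]: "evV (rhos L X) = evV X" "evE (rhos L X) = evE X" "evA (rhos L X) = evA X"
  "evl (rhos L X) = (\<lambda>x. ren L (evl X x))"
  by (induction L X rule: rhos.induct) auto

lemma wf_rhos[simp]: "cw_wf (rhos L X) = cw_wf X"
  by (induction L X rule: rhos.induct) auto

lemma labels_rhos: "cw_labels (rhos L X) = cw_labels X \<union> fst ` set L \<union> snd ` set L"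
  by (induction L X rule: rhos.induct) auto

lemma ren_map: "distinct cs \<Longrightarrow> (\<forall>c\<in>set cs. g c \<notin> set cs) \<Longrightarrow>
   ren (map (\<lambda>c. (c, g c)) cs) x = (if x \<in> set cs then g x else x)"
  by (induction cs) auto

fun alphas :: "(nat\<times>nat) list \<Rightarrow> 'a cwexp \<Rightarrow> 'a cwexp" where
  "alphas [] X = X"
| "alphas ((i,j)#L) X = Alpha i j (alphas L X)"

lemma ev_alphas[simp]: "evV (alphas L X) = evV X" "evE (alphas L X) = evE X"
  "evA (alphas L X) = evA X \<union> {(x,y). x \<in> evV X \<and> y \<in> evV X \<and> (evl X x, evl X y) \<in> set L}"
  "evl (alphas L X) = evl X"
  by (induction L X rule: alphas.induct) auto

lemma wf_alphas: "cw_wf (alphas L X) = (cw_wf X \<and> (\<forall>(i,j)\<in>set L. i \<noteq> j))"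
  by (induction L X rule: alphas.induct) auto

lemma labels_alphas: "cw_labels (alphas L X) = cw_labels X \<union> fst ` set L \<union> snd ` set L"
  by (induction L X rule: alphas.induct) auto

fun etas :: "(nat\<times>nat) list \<Rightarrow> 'a cwexp \<Rightarrow> 'a cwexp" where
  "etas [] X = X"
| "etas ((i,j)#L) X = Eta i j (etas L X)"

lemma ev_etas[simp]: "evV (etas L X) = evV X" "evA (etas L X) = evA X"
  "evE (etas L X) = evE X \<union> {(x,y). x \<in> evV X \<and> y \<in> evV X \<and> ((evl X x, evl X y) \<in> set L \<or> (evl X y, evl X x) \<in> set L)}"
  "evl (etas L X) = evl X"
  by (induction L X rule: etas.induct) auto

lemma wf_etas: "cw_wf (etas L X) = (cw_wf X \<and> (\<forall>(i,j)\<in>set L. i \<noteq> j))"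
  by (induction L X rule: etas.induct) auto

lemma labels_etas: "cw_labels (etas L X) = cw_labels X \<union> fst ` set L \<union> snd ` set L"
  by (induction L X rule: etas.induct) auto

definition shiftE :: "nat \<Rightarrow> 'a cwexp \<Rightarrow> 'a cwexp" where
  "shiftE M X = rhos (map (\<lambda>c. (c, M + c)) [0..<M]) X"

definition backE :: "nat \<Rightarrow> 'a cwexp \<Rightarrow> 'a cwexp" where
  "backE M X = rhos (map (\<lambda>c. (c, c - M)) [M..<2*M]) X"

definition remapE :: "nat \<Rightarrow> (nat \<Rightarrow> nat) \<Rightarrow> 'a cwexp \<Rightarrow> 'a cwexp" where
  "remapE M F X = backE M (rhos (map (\<lambda>c. (c, M + F c)) [0..<M]) X)"

lemma ren_shift: "ren (map (\<lambda>c. (c, M + c)) [0..<M]) x = (if x < M then M + x else x)"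
  by (subst ren_map) auto

lemma ren_back: "ren (map (\<lambda>c. (c, c - M)) [M..<2*M]) x = (if M \<le> x \<and> x < 2*M then x - M else x)"
  by (subst ren_map) auto

lemma ren_remap1: "ren (map (\<lambda>c. (c, M + F c)) [0..<M]) x = (if x < M then M + F x else x)"
  by (subst ren_map) auto

lemma ev_shiftE[simp]: "evV (shiftE M X) = evV X" "evE (shiftE M X) = evE X" "evA (shiftE M X) = evA X"
  "evl (shiftE M X) = (\<lambda>x. if evl X x < M then M + evl X x else evl X x)"
  "cw_wf (shiftE M X) = cw_wf X"
  by (simp_all add: shiftE_def ren_shift)

lemma ev_backE[simp]: "evV (backE M X) = evV X" "evE (backE M X) = evE X" "evA (backE M X) = evA X"
  "evl (backE M X) = (\<lambda>x. if M \<le> evl X x \<and> evl X x < 2*M then evl X x - M else evl X x)"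
  "cw_wf (backE M X) = cw_wf X"
  by (simp_all add: backE_def ren_back)

lemma ev_remapE[simp]: "evV (remapE M F X) = evV X" "evE (remapE M F X) = evE X" "evA (remapE M F X) = evA X"
  "cw_wf (remapE M F X) = cw_wf X"
  by (simp_all add: remapE_def)

lemma evl_remapE: "(\<forall>c<M. F c < M) \<Longrightarrow> evl X x < M \<Longrightarrow> evl (remapE M F X) x = F (evl X x)"
  by (simp add: remapE_def ren_remap1)

lemma labels_shiftE: "cw_labels X \<subseteq> {..<2*M} \<Longrightarrow> cw_labels (shiftE M X) \<subseteq> {..<2*M}"
  unfolding shiftE_def labels_rhos by auto

lemma labels_backE: "cw_labels X \<subseteq> {..<2*M} \<Longrightarrow> cw_labels (backE M X) \<subseteq> {..<2*M}"
  unfolding backE_def labels_rhos by auto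

lemma labels_remapE: "(\<forall>c<M. F c < M) \<Longrightarrow> cw_labels X \<subseteq> {..<2*M} \<Longrightarrow> cw_labels (remapE M F X) \<subseteq> {..<2*M}"
  unfolding remapE_def backE_def labels_rhos by auto


lemma reach_union:
  assumes A1: "A1 \<subseteq> V1 \<times> V1" and A2: "A2 \<subseteq> V2 \<times> V2" and d: "V1 \<inter> V2 = {}" and x: "x \<in> V1"
  shows "(x,z) \<in> (A1 \<union> A2)\<^sup>* \<longleftrightarrow> (x,z) \<in> A1\<^sup>*"
proof
  assume "(x,z) \<in> (A1 \<union> A2)\<^sup>*"
  then show "(x,z) \<in> A1\<^sup>*"
  proof (induction rule: rtrancl_induct)
    case base then show ?case by simp
  next
    case (step y z)
    have yV: "y \<in> V1" using rtrancl_closed[OF step.IH A1 x] .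
    have "(y,z) \<notin> A2" using yV A2 d by blast
    then have "(y,z) \<in> A1" using step.hyps(2) by blast
    then show ?case using step.IH by (meson rtrancl.rtrancl_into_rtrancl)
  qed
next
  assume "(x,z) \<in> A1\<^sup>*"
  then show "(x,z) \<in> (A1 \<union> A2)\<^sup>*" using rtrancl_mono[of A1 "A1 \<union> A2"] by blast
qed

lemma Oset_union:
  assumes A1: "A1 \<subseteq> V1 \<times> V1" and A2: "A2 \<subseteq> V2 \<times> V2" and d: "V1 \<inter> V2 = {}" and x: "x \<in> V1"
    and l: "\<And>y. y \<in> V1 \<Longrightarrow> l y = l1 y"
  shows "Oset (A1 \<union> A2) l x = Oset A1 l1 x"
proof -
  have S: "(A1 \<union> A2)\<^sup>* `` {x} = A1\<^sup>* `` {x}"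
    using reach_union[OF A1 A2 d x] by blast
  have "\<And>z. z \<in> A1\<^sup>* `` {x} \<Longrightarrow> z \<in> V1"
  proof -
    fix z assume "z \<in> A1\<^sup>* `` {x}"
    then have "(x,z) \<in> A1\<^sup>*" by simp
    then show "z \<in> V1" using rtrancl_closed[OF _ A1 x] by blast
  qed
  then show ?thesis unfolding Oset_def S using l by (simp add: image_def)
qed

lemma tau_union1:
  assumes wf: "cw_wf (DUnion f g)" and x: "x \<in> evV f"
  shows "tau (DUnion f g) x = tau f x"
proof -
  have d: "evV f \<inter> evV g = {}" using wf by simp
  have s: "evA f \<subseteq> evV f \<times> evV f" "evA g \<subseteq> evV g \<times> evV g" "(evA f)\<inverse> \<subseteq> evV f \<times> evV f" "(evA g)\<inverse> \<subseteq> evV g \<times> evV g"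
    using ev_sub[of f] ev_sub[of g] by auto
  have l: "\<And>y. y \<in> evV f \<Longrightarrow> evl (DUnion f g) y = evl f y" by simp
  have c: "(evA f \<union> evA g)\<inverse> = (evA f)\<inverse> \<union> (evA g)\<inverse>" by auto
  have o1: "Oset (evA f \<union> evA g) (evl (DUnion f g)) x = Oset (evA f) (evl f) x"
    by (rule Oset_union[OF s(1) s(2) d x l])
  have o2: "Oset ((evA f)\<inverse> \<union> (evA g)\<inverse>) (evl (DUnion f g)) x = Oset ((evA f)\<inverse>) (evl f) x"
    by (rule Oset_union[OF s(3) s(4) d x l])
  have c3: "evA (DUnion f g) = evA f \<union> evA g" by simp
  show ?thesis unfolding tau_def c3 c o1 o2 using x by simp
qed

lemma tau_union2:
  assumes wf: "cw_wf (DUnion f g)" and x: "x \<in> evV g"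
  shows "tau (DUnion f g) x = tau g x"
proof -
  have d: "evV g \<inter> evV f = {}" using wf by auto
  have s: "evA f \<subseteq> evV f \<times> evV f" "evA g \<subseteq> evV g \<times> evV g" "(evA f)\<inverse> \<subseteq> evV f \<times> evV f" "(evA g)\<inverse> \<subseteq> evV g \<times> evV g"
    using ev_sub[of f] ev_sub[of g] by auto
  have xf: "x \<notin> evV f" using d x by blast
  have l: "\<And>y. y \<in> evV g \<Longrightarrow> evl (DUnion f g) y = evl g y" using d by auto
  have c: "evA f \<union> evA g = evA g \<union> evA f" by auto
  have c2: "(evA g \<union> evA f)\<inverse> = (evA g)\<inverse> \<union> (evA f)\<inverse>" by auto
  have o1: "Oset (evA g \<union> evA f) (evl (DUnion f g)) x = Oset (evA g) (evl g) x"
    by (rule Oset_union[OF s(2) s(1) d x l])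
  have o2: "Oset ((evA g)\<inverse> \<union> (evA f)\<inverse>) (evl (DUnion f g)) x = Oset ((evA g)\<inverse>) (evl g) x"
    by (rule Oset_union[OF s(4) s(3) d x l])
  have c3: "evA (DUnion f g) = evA f \<union> evA g" by simp
  show ?thesis unfolding tau_def c3 c c2 o1 o2 using x xf by simp
qed

lemma cross_noreach:
  assumes A1: "A1 \<subseteq> V1 \<times> V1" and A2: "A2 \<subseteq> V2 \<times> V2" and d: "V1 \<inter> V2 = {}" and x: "x \<in> V1" and y: "y \<in> V2"
  shows "(x,y) \<notin> (A1 \<union> A2)\<^sup>+"
proof
  assume "(x,y) \<in> (A1 \<union> A2)\<^sup>+"
  then have "(x,y) \<in> (A1 \<union> A2)\<^sup>*" by (rule trancl_into_rtrancl)
  then have "(x,y) \<in> A1\<^sup>*" using reach_union[OF A1 A2 d x] by blast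
  then have "y \<in> V1" using rtrancl_closed[OF _ A1 x] by blast
  then show False using y d by blast
qed

lemma union_det_R:
  assumes M: "Mod k V0 E0 A0 (DUnion f g)"
    and xs: "x \<in> evV f" "x0 \<in> evV f" "y \<in> evV g" "y0 \<in> evV g"
    and t: "tau f x0 = tau f x" "tau g y0 = tau g y"
    and r: "(x0,y0) \<in> A0\<^sup>+"
  shows "(x,y) \<in> A0\<^sup>+"
proof -
  let ?s = "DUnion f g"
  have wf: "cw_wf ?s" using ModD(1)[OF M] .
  have d: "evV f \<inter> evV g = {}" using wf by simp
  have s: "evA f \<subseteq> evV f \<times> evV f" "evA g \<subseteq> evV g \<times> evV g" using ev_sub[of f] ev_sub[of g] by auto
  have ts: "tau ?s x0 = tau ?s x" "tau ?s y0 = tau ?s y"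
    using t tau_union1[OF wf] tau_union2[OF wf] xs by simp_all
  have nr: "(x0,y0) \<notin> (evA ?s)\<^sup>+" unfolding ev_DUnion by (rule cross_noreach[OF s d xs(2) xs(4)])
  show ?thesis
    by (rule reach_det[OF M _ _ _ _ _ _ r nr]) (use xs ts in \<open>auto simp: tau_def\<close>)
qed

lemma union_det_R':
  assumes M: "Mod k V0 E0 A0 (DUnion f g)"
    and xs: "x \<in> evV f" "x0 \<in> evV f" "y \<in> evV g" "y0 \<in> evV g"
    and t: "tau f x0 = tau f x" "tau g y0 = tau g y"
    and r: "(y0,x0) \<in> A0\<^sup>+"
  shows "(y,x) \<in> A0\<^sup>+"
proof -
  let ?s = "DUnion f g"
  have wf: "cw_wf ?s" using ModD(1)[OF M] .
  have d: "evV g \<inter> evV f = {}" using wf by auto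
  have s: "evA f \<subseteq> evV f \<times> evV f" "evA g \<subseteq> evV g \<times> evV g" using ev_sub[of f] ev_sub[of g] by auto
  have ts: "tau ?s x0 = tau ?s x" "tau ?s y0 = tau ?s y"
    using t tau_union1[OF wf] tau_union2[OF wf] xs by simp_all
  have c: "evA f \<union> evA g = evA g \<union> evA f" by auto
  have nr: "(y0,x0) \<notin> (evA ?s)\<^sup>+" unfolding ev_DUnion c by (rule cross_noreach[OF s(2) s(1) d xs(4) xs(2)])
  show ?thesis
    by (rule reach_det[OF M _ _ _ _ _ _ r nr]) (use xs ts in \<open>auto simp: tau_def\<close>)
qed

lemma union_det_E0:
  assumes M: "Mod k V0 E0 A0 (DUnion f g)"
    and xs: "x \<in> evV f" "x0 \<in> evV f" "y \<in> evV g" "y0 \<in> evV g"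
    and t: "tau f x0 = tau f x" "tau g y0 = tau g y"
    and r: "(x0,y0) \<in> E0"
  shows "(x,y) \<in> E0"
proof -
  let ?s = "DUnion f g"
  have wf: "cw_wf ?s" using ModD(1)[OF M] .
  have d: "evV f \<inter> evV g = {}" using wf by simp
  have s: "evE f \<subseteq> evV f \<times> evV f" "evE g \<subseteq> evV g \<times> evV g" using ev_sub[of f] ev_sub[of g] by auto
  have ts: "tau ?s x0 = tau ?s x" "tau ?s y0 = tau ?s y"
    using t tau_union1[OF wf] tau_union2[OF wf] xs by simp_all
  have nr: "(x0,y0) \<notin> evE ?s" using s d xs by auto
  have V: "x \<in> evV ?s" "x0 \<in> evV ?s" "y \<in> evV ?s" "y0 \<in> evV ?s" using xs by auto
  have l: "evl ?s x0 = evl ?s x" "evl ?s y0 = evl ?s y" using ts by (simp_all add: tau_def)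
  show ?thesis by (rule ModD(7)[OF M V(2) V(1) V(4) V(3) l r nr])
qed


definition PR :: "(ty \<Rightarrow> nat) \<Rightarrow> ('a\<times>'a) set \<Rightarrow> 'a cwexp \<Rightarrow> 'a cwexp \<Rightarrow> nat \<Rightarrow> nat \<Rightarrow> bool" where
  "PR cd R f g c d \<longleftrightarrow> (\<exists>x\<in>evV f. \<exists>y\<in>evV g. cd (tau f x) = c \<and> cd (tau g y) = d \<and> (x,y)\<in>R)"

definition crossL :: "nat \<Rightarrow> (nat \<Rightarrow> nat \<Rightarrow> bool) \<Rightarrow> (nat\<times>nat) list" where
  "crossL M P = map (\<lambda>(c,d). (c, M+d)) (filter (\<lambda>(c,d). P c d) (List.product [0..<M] [0..<M]))"

definition crossL' :: "nat \<Rightarrow> (nat \<Rightarrow> nat \<Rightarrow> bool) \<Rightarrow> (nat\<times>nat) list" where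
  "crossL' M P = map (\<lambda>(d,c). (M+d, c)) (filter (\<lambda>(d,c). P d c) (List.product [0..<M] [0..<M]))"

lemma mem_crossL: "(a,b) \<in> set (crossL M P) \<longleftrightarrow> a < M \<and> M \<le> b \<and> b < 2*M \<and> P a (b - M)"
  unfolding crossL_def by (auto simp: image_iff) (rule exI[of _ a], simp, rule exI[of _ "b - M"], auto)

lemma mem_crossL': "(a,b) \<in> set (crossL' M P) \<longleftrightarrow> M \<le> a \<and> a < 2*M \<and> b < M \<and> P (a - M) b"
  unfolding crossL'_def by (auto simp: image_iff) (rule exI[of _ "a - M"], auto)

definition FM :: "(ty \<Rightarrow> nat) \<Rightarrow> 'a cwexp \<Rightarrow> 'a cwexp \<Rightarrow> nat \<Rightarrow> nat" where
  "FM cd f g c = (if \<exists>u\<in>evV f. cd (tau f u) = c then cd (tau g (SOME u. u\<in>evV f \<and> cd (tau f u) = c)) else c)"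

fun T :: "nat \<Rightarrow> (ty \<Rightarrow> nat) \<Rightarrow> ('a\<times>'a) set \<Rightarrow> ('a\<times>'a) set \<Rightarrow> 'a cwexp \<Rightarrow> 'a cwexp" where
  "T M cd R E' (Vtx v i) = Vtx v (cd (i,{i},{i}))"
| "T M cd R E' (DUnion f g) = backE M (etas (crossL M (PR cd E' f g))
      (alphas (crossL M (PR cd R f g) @ crossL' M (PR cd R g f))
        (DUnion (T M cd R E' f) (shiftE M (T M cd R E' g)))))"
| "T M cd R E' (Eta i j f) = remapE M (FM cd f (Eta i j f)) (T M cd R E' f)"
| "T M cd R E' (Alpha i j f) = remapE M (FM cd f (Alpha i j f)) (T M cd R E' f)"
| "T M cd R E' (Rho i j f) = remapE M (FM cd f (Rho i j f)) (T M cd R E' f)"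

definition Good :: "nat \<Rightarrow> (ty\<Rightarrow>nat) \<Rightarrow> ('a\<times>'a) set \<Rightarrow> ('a\<times>'a) set \<Rightarrow> 'a cwexp \<Rightarrow> 'a cwexp \<Rightarrow> bool" where
  "Good M cd R E' f X \<longleftrightarrow> cw_wf X \<and> cw_labels X \<subseteq> {..<2*M} \<and> evV X = evV f \<and>
     evE X = E' \<inter> (evV f \<times> evV f) \<and> evA X = R \<inter> (evV f \<times> evV f) \<and> (\<forall>u\<in>evV f. evl X u = cd (tau f u))"

lemma unary_good:
  assumes inj: "inj_on cd (Tset k)" and rng: "\<forall>t\<in>Tset k. cd t < M"
    and Mg: "Mod k V0 E0 A0 g" and Mf: "Mod k V0 E0 A0 f" and V: "evV g = evV f"
    and det: "\<And>u u'. u\<in>evV f \<Longrightarrow> u'\<in>evV f \<Longrightarrow> tau f u = tau f u' \<Longrightarrow> tau g u = tau g u'"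
    and G: "Good M cd R E' f X"
  shows "Good M cd R E' g (remapE M (FM cd f g) X)"
proof -
  have lf: "cw_labels f \<subseteq> {..<k}" using ModD(2)[OF Mf] .
  have lg: "cw_labels g \<subseteq> {..<k}" using ModD(2)[OF Mg] .
  have Fb: "\<forall>c<M. FM cd f g c < M"
  proof (intro allI impI)
    fix c assume c: "c < M"
    show "FM cd f g c < M"
    proof (cases "\<exists>u\<in>evV f. cd (tau f u) = c")
      case True
      then have "(SOME u. u\<in>evV f \<and> cd (tau f u) = c) \<in> evV f" by (metis (mono_tags, lifting) someI_ex)
      then have "tau g (SOME u. u\<in>evV f \<and> cd (tau f u) = c) \<in> Tset k" using tau_in_Tset[OF lg] V by simp
      then show ?thesis using True rng unfolding FM_def by simp
    next
      case False then show ?thesis using c unfolding FM_def by simp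
    qed
  qed
  have G1: "cw_wf X" "cw_labels X \<subseteq> {..<2*M}" "evV X = evV f" "evE X = E' \<inter> (evV f \<times> evV f)"
    "evA X = R \<inter> (evV f \<times> evV f)" "\<And>u. u\<in>evV f \<Longrightarrow> evl X u = cd (tau f u)"
    using G unfolding Good_def by simp_all
  have lab: "evl (remapE M (FM cd f g) X) u = cd (tau g u)" if u: "u \<in> evV f" for u
  proof -
    have tf: "tau f u \<in> Tset k" using tau_in_Tset[OF lf u] .
    have lt: "evl X u < M" using G1(6)[OF u] tf rng by simp
    have "evl (remapE M (FM cd f g) X) u = FM cd f g (cd (tau f u))"
      using evl_remapE[OF Fb lt] G1(6)[OF u] by simp
    also have "\<dots> = cd (tau g u)"
    proof -
      have ex: "\<exists>w. w\<in>evV f \<and> cd (tau f w) = cd (tau f u)" using u by blast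
      define u0 where "u0 = (SOME w. w\<in>evV f \<and> cd (tau f w) = cd (tau f u))"
      have u0: "u0 \<in> evV f" "cd (tau f u0) = cd (tau f u)" using someI_ex[OF ex] unfolding u0_def by blast+
      have "tau f u0 = tau f u" using inj_onD[OF inj u0(2) tau_in_Tset[OF lf u0(1)] tf] .
      then have "tau g u0 = tau g u" using det u0(1) u by blast
      moreover have "FM cd f g (cd (tau f u)) = cd (tau g u0)" unfolding FM_def u0_def using u by auto
      ultimately show ?thesis by simp
    qed
    finally show ?thesis .
  qed
  show ?thesis unfolding Good_def
    using G1 V lab labels_remapE[OF Fb G1(2)] by simp
qed


lemma union_good:
  assumes inj: "inj_on cd (Tset k)" and rng: "\<forall>t\<in>Tset k. cd t < M"
    and hR: "R = A0\<^sup>+" and hE: "E' = E0 - (R \<union> R\<inverse>)" and symE: "sym E0"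
    and Ms: "Mod k V0 E0 A0 (DUnion f g)"
    and Gf: "Good M cd R E' f X1" and Gg: "Good M cd R E' g X2"
  shows "Good M cd R E' (DUnion f g) (backE M (etas (crossL M (PR cd E' f g))
      (alphas (crossL M (PR cd R f g) @ crossL' M (PR cd R g f))
        (DUnion X1 (shiftE M X2)))))"
proof -
  let ?s = "DUnion f g"
  let ?Vf = "evV f" let ?Vg = "evV g"
  let ?LE = "crossL M (PR cd E' f g)"
  let ?LA = "crossL M (PR cd R f g) @ crossL' M (PR cd R g f)"
  let ?Z = "DUnion X1 (shiftE M X2)"
  let ?Y = "backE M (etas ?LE (alphas ?LA ?Z))"
  have wfs: "cw_wf ?s" using ModD(1)[OF Ms] .
  have d: "?Vf \<inter> ?Vg = {}" using wfs by simp
  have Mf: "Mod k V0 E0 A0 f" by (rule Mod_child[OF Ms CF_DUnion1[OF wfs]])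
  have Mg: "Mod k V0 E0 A0 g" by (rule Mod_child[OF Ms CF_DUnion2[OF wfs]])
  have lf: "cw_labels f \<subseteq> {..<k}" using ModD(2)[OF Mf] .
  have lg: "cw_labels g \<subseteq> {..<k}" using ModD(2)[OF Mg] .
  have G1: "cw_wf X1" "cw_labels X1 \<subseteq> {..<2*M}" "evV X1 = ?Vf" "evE X1 = E' \<inter> (?Vf \<times> ?Vf)"
    "evA X1 = R \<inter> (?Vf \<times> ?Vf)" "\<And>u. u\<in>?Vf \<Longrightarrow> evl X1 u = cd (tau f u)"
    using Gf unfolding Good_def by simp_all
  have G2: "cw_wf X2" "cw_labels X2 \<subseteq> {..<2*M}" "evV X2 = ?Vg" "evE X2 = E' \<inter> (?Vg \<times> ?Vg)"
    "evA X2 = R \<inter> (?Vg \<times> ?Vg)" "\<And>u. u\<in>?Vg \<Longrightarrow> evl X2 u = cd (tau g u)"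
    using Gg unfolding Good_def by simp_all
  have cf: "\<And>x. x \<in> ?Vf \<Longrightarrow> cd (tau f x) < M" using tau_in_Tset[OF lf] rng by blast
  have cg: "\<And>x. x \<in> ?Vg \<Longrightarrow> cd (tau g x) < M" using tau_in_Tset[OF lg] rng by blast
  have injf: "\<And>x x0. x \<in> ?Vf \<Longrightarrow> x0 \<in> ?Vf \<Longrightarrow> cd (tau f x0) = cd (tau f x) \<Longrightarrow> tau f x0 = tau f x"
    using inj tau_in_Tset[OF lf] by (meson inj_onD)
  have injg: "\<And>x x0. x \<in> ?Vg \<Longrightarrow> x0 \<in> ?Vg \<Longrightarrow> cd (tau g x0) = cd (tau g x) \<Longrightarrow> tau g x0 = tau g x"
    using inj tau_in_Tset[OF lg] by (meson inj_onD)
  have l0f: "\<And>x. x \<in> ?Vf \<Longrightarrow> evl ?Z x = cd (tau f x)" using G1(3,6) cf by simp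
  have l0g: "\<And>x. x \<in> ?Vg \<Longrightarrow> evl ?Z x = M + cd (tau g x)" using G1(3) G2(6) d cg by auto
  have V0: "evV ?Z = ?Vf \<union> ?Vg" using G1(3) G2(3) by simp
  have PRf: "PR cd R f g (cd (tau f x)) (cd (tau g y)) \<longleftrightarrow> (x,y) \<in> R" if xy: "x \<in> ?Vf" "y \<in> ?Vg" for x y
  proof
    assume "PR cd R f g (cd (tau f x)) (cd (tau g y))"
    then obtain x0 y0 where h: "x0 \<in> ?Vf" "y0 \<in> ?Vg" "cd (tau f x0) = cd (tau f x)" "cd (tau g y0) = cd (tau g y)" "(x0,y0)\<in>R"
      unfolding PR_def by blast
    show "(x,y)\<in>R" using union_det_R[OF Ms xy(1) h(1) xy(2) h(2) injf[OF xy(1) h(1) h(3)] injg[OF xy(2) h(2) h(4)]] h(5) hR by simp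
  next
    assume "(x,y)\<in>R" then show "PR cd R f g (cd (tau f x)) (cd (tau g y))" unfolding PR_def using xy by blast
  qed
  have PRg: "PR cd R g f (cd (tau g y)) (cd (tau f x)) \<longleftrightarrow> (y,x) \<in> R" if xy: "x \<in> ?Vf" "y \<in> ?Vg" for x y
  proof
    assume "PR cd R g f (cd (tau g y)) (cd (tau f x))"
    then obtain x0 y0 where h: "y0 \<in> ?Vg" "x0 \<in> ?Vf" "cd (tau g y0) = cd (tau g y)" "cd (tau f x0) = cd (tau f x)" "(y0,x0)\<in>R"
      unfolding PR_def by blast
    show "(y,x)\<in>R" using union_det_R'[OF Ms xy(1) h(2) xy(2) h(1) injf[OF xy(1) h(2) h(4)] injg[OF xy(2) h(1) h(3)]] h(5) hR by simp
  next
    assume "(y,x)\<in>R" then show "PR cd R g f (cd (tau g y)) (cd (tau f x))" unfolding PR_def using xy by blast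
  qed
  have PRE: "PR cd E' f g (cd (tau f x)) (cd (tau g y)) \<longleftrightarrow> (x,y) \<in> E'" if xy: "x \<in> ?Vf" "y \<in> ?Vg" for x y
  proof
    assume "PR cd E' f g (cd (tau f x)) (cd (tau g y))"
    then obtain x0 y0 where h: "x0 \<in> ?Vf" "y0 \<in> ?Vg" "cd (tau f x0) = cd (tau f x)" "cd (tau g y0) = cd (tau g y)" "(x0,y0)\<in>E'"
      unfolding PR_def by blast
    have t: "tau f x0 = tau f x" "tau g y0 = tau g y" using injf[OF xy(1) h(1) h(3)] injg[OF xy(2) h(2) h(4)] .
    have t': "tau f x = tau f x0" "tau g y = tau g y0" using t by simp_all
    have e0: "(x,y) \<in> E0" using union_det_E0[OF Ms xy(1) h(1) xy(2) h(2) t] h(5) hE by blast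
    have n1: "(x,y) \<notin> R"
    proof
      assume "(x,y) \<in> R"
      then have "(x0,y0) \<in> R" using union_det_R[OF Ms h(1) xy(1) h(2) xy(2) t'] hR by simp
      then show False using h(5) hE by blast
    qed
    have n2: "(y,x) \<notin> R"
    proof
      assume "(y,x) \<in> R"
      then have "(y0,x0) \<in> R" using union_det_R'[OF Ms h(1) xy(1) h(2) xy(2) t'] hR by simp
      then show False using h(5) hE by blast
    qed
    show "(x,y)\<in>E'" using e0 n1 n2 hE by blast
  next
    assume "(x,y)\<in>E'" then show "PR cd E' f g (cd (tau f x)) (cd (tau g y))" unfolding PR_def using xy by blast
  qed
  have symE': "\<And>x y. (x,y) \<in> E' \<Longrightarrow> (y,x) \<in> E'" using symE hE unfolding sym_def by blast
  have KA: "(evl ?Z x, evl ?Z y) \<in> set ?LA \<longleftrightarrow> (x,y) \<in> R \<and> ((x \<in> ?Vf \<and> y \<in> ?Vg) \<or> (x \<in> ?Vg \<and> y \<in> ?Vf))"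
    if xy: "x \<in> ?Vf \<union> ?Vg" "y \<in> ?Vf \<union> ?Vg" for x y
  proof -
    have mem: "(a,b) \<in> set ?LA \<longleftrightarrow> (a < M \<and> M \<le> b \<and> b < 2*M \<and> PR cd R f g a (b - M)) \<or>
                 (M \<le> a \<and> a < 2*M \<and> b < M \<and> PR cd R g f (a - M) b)" for a b
      by (simp add: mem_crossL mem_crossL')
    show ?thesis
    proof (cases "x \<in> ?Vf")
      case xf: True
      show ?thesis
      proof (cases "y \<in> ?Vf")
        case yf: True
        show ?thesis unfolding l0f[OF xf] l0f[OF yf] mem using cf[OF xf] cf[OF yf] xf yf d by auto
      next
        case False
        then have yg: "y \<in> ?Vg" using xy by blast
        show ?thesis unfolding l0f[OF xf] l0g[OF yg] mem using cf[OF xf] cg[OF yg] xf yg d PRf[OF xf yg] by auto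
      qed
    next
      case False
      then have xg: "x \<in> ?Vg" using xy by blast
      show ?thesis
      proof (cases "y \<in> ?Vf")
        case yf: True
        show ?thesis unfolding l0g[OF xg] l0f[OF yf] mem using cg[OF xg] cf[OF yf] xg yf d PRg[OF yf xg] by auto
      next
        case False
        then have yg: "y \<in> ?Vg" using xy by blast
        show ?thesis unfolding l0g[OF xg] l0g[OF yg] mem using cg[OF xg] cg[OF yg] xg yg d by auto
      qed
    qed
  qed
  have KE: "(evl ?Z x, evl ?Z y) \<in> set ?LE \<longleftrightarrow> x \<in> ?Vf \<and> y \<in> ?Vg \<and> (x,y) \<in> E'"
    if xy: "x \<in> ?Vf \<union> ?Vg" "y \<in> ?Vf \<union> ?Vg" for x y
  proof -
    have mem: "(a,b) \<in> set ?LE \<longleftrightarrow> (a < M \<and> M \<le> b \<and> b < 2*M \<and> PR cd E' f g a (b - M))" for a b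
      by (simp add: mem_crossL)
    show ?thesis
    proof (cases "x \<in> ?Vf")
      case xf: True
      show ?thesis
      proof (cases "y \<in> ?Vf")
        case yf: True
        show ?thesis unfolding l0f[OF xf] l0f[OF yf] mem using cf[OF xf] cf[OF yf] xf yf d by auto
      next
        case False
        then have yg: "y \<in> ?Vg" using xy by blast
        show ?thesis unfolding l0f[OF xf] l0g[OF yg] mem using cf[OF xf] cg[OF yg] xf yg d PRE[OF xf yg] by auto
      qed
    next
      case False
      then have xg: "x \<in> ?Vg" using xy by blast
      show ?thesis unfolding l0g[OF xg] mem using cg[OF xg] xg d by auto
    qed
  qed
  have wfY: "cw_wf ?Y"
  proof -
    have nA: "i \<noteq> j" if ij: "(i,j) \<in> set ?LA" for i j
    proof -
      have "(i,j) \<in> set (crossL M (PR cd R f g)) \<or> (i,j) \<in> set (crossL' M (PR cd R g f))" using ij by simp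
      then show "i \<noteq> j" unfolding mem_crossL mem_crossL' by auto
    qed
    have "\<forall>(i,j)\<in>set ?LA. i \<noteq> j"
    proof
      fix p assume p: "p \<in> set ?LA"
      obtain i j where pij: "p = (i,j)" by (cases p)
      show "case p of (i,j) \<Rightarrow> i \<noteq> j" using nA[of i j] p pij by simp
    qed
    moreover have "\<forall>(i,j)\<in>set ?LE. i \<noteq> j"
    proof
      fix p assume p: "p \<in> set ?LE"
      obtain i j where pij: "p = (i,j)" by (cases p)
      have "i \<noteq> j" using p unfolding pij mem_crossL by auto
      then show "case p of (i,j) \<Rightarrow> i \<noteq> j" using pij by simp
    qed
    moreover have "cw_wf ?Z" using G1(1,3) G2(1,3) d by simp
    ultimately show ?thesis by (simp add: wf_etas wf_alphas)
  qed
  have labY: "cw_labels ?Y \<subseteq> {..<2*M}"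
  proof -
    have a: "fst ` set ?LA \<subseteq> {..<2*M}" "snd ` set ?LA \<subseteq> {..<2*M}"
      "fst ` set ?LE \<subseteq> {..<2*M}" "snd ` set ?LE \<subseteq> {..<2*M}"
      by (auto simp: mem_crossL mem_crossL')
    have "cw_labels ?Z \<subseteq> {..<2*M}" using G1(2) labels_shiftE[OF G2(2)] by simp
    then have "cw_labels (etas ?LE (alphas ?LA ?Z)) \<subseteq> {..<2*M}"
      unfolding labels_etas labels_alphas using a by blast
    then show ?thesis by (rule labels_backE)
  qed
  have VY: "evV ?Y = evV ?s" using V0 by simp
  have lY: "\<forall>u\<in>evV ?s. evl ?Y u = cd (tau ?s u)"
  proof
    fix u assume u: "u \<in> evV ?s"
    have eY: "evl ?Y u = (if M \<le> evl ?Z u \<and> evl ?Z u < 2*M then evl ?Z u - M else evl ?Z u)"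
      by (simp only: ev_backE ev_etas ev_alphas)
    show "evl ?Y u = cd (tau ?s u)"
    proof (cases "u \<in> ?Vf")
      case True then show ?thesis unfolding eY l0f[OF True] tau_union1[OF wfs True] using cf[OF True] by simp
    next
      case False
      then have ug: "u \<in> ?Vg" using u by simp
      then show ?thesis unfolding eY l0g[OF ug] tau_union2[OF wfs ug] using cg[OF ug] by simp
    qed
  qed
  have AY: "evA ?Y = R \<inter> (evV ?s \<times> evV ?s)"
  proof (rule set_eqI)
    fix p show "p \<in> evA ?Y \<longleftrightarrow> p \<in> R \<inter> (evV ?s \<times> evV ?s)"
    proof (cases p)
      case (Pair x y)
      have e: "evA ?Y = R \<inter> (?Vf \<times> ?Vf) \<union> R \<inter> (?Vg \<times> ?Vg) \<union>
          {(x,y). x \<in> ?Vf \<union> ?Vg \<and> y \<in> ?Vf \<union> ?Vg \<and> (evl ?Z x, evl ?Z y) \<in> set ?LA}"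
        using G1(5) G2(5) V0 by simp
      show ?thesis unfolding Pair e using KA[of x y] by auto
    qed
  qed
  have EY: "evE ?Y = E' \<inter> (evV ?s \<times> evV ?s)"
  proof (rule set_eqI)
    fix p show "p \<in> evE ?Y \<longleftrightarrow> p \<in> E' \<inter> (evV ?s \<times> evV ?s)"
    proof (cases p)
      case (Pair x y)
      have e: "evE ?Y = E' \<inter> (?Vf \<times> ?Vf) \<union> E' \<inter> (?Vg \<times> ?Vg) \<union>
          {(x,y). x \<in> ?Vf \<union> ?Vg \<and> y \<in> ?Vf \<union> ?Vg \<and> ((evl ?Z x, evl ?Z y) \<in> set ?LE \<or> (evl ?Z y, evl ?Z x) \<in> set ?LE)}"
        using G1(4) G2(4) V0 by simp
      show ?thesis unfolding Pair e using KE[of x y] KE[of y x] symE'[of x y] symE'[of y x] d by auto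
    qed
  qed
  show ?thesis unfolding Good_def using wfY labY VY lY AY EY by blast
qed


lemma T_good:
  assumes inj: "inj_on cd (Tset k)" and rng: "\<forall>t\<in>Tset k. cd t < M"
    and hR: "R = A0\<^sup>+" and hE: "E' = E0 - (R \<union> R\<inverse>)" and symE: "sym E0"
    and irrE: "\<forall>v. (v,v) \<notin> E0" and irrR: "\<forall>v. (v,v) \<notin> R"
  shows "Mod k V0 E0 A0 f \<Longrightarrow> Good M cd R E' f (T M cd R E' f)"
proof (induction f)
  case (Vtx v i)
  have tv: "tau (Vtx v i) v = (i,{i},{i})" by (simp add: tau_def Oset_def)
  have "i < k" using ModD(2)[OF Vtx.prems] by simp
  then have "(i,{i},{i}) \<in> Tset k" unfolding Tset_def by simp
  then have c: "cd (i,{i},{i}) < M" using rng by blast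
  have "(v,v) \<notin> E'" using irrE hE by blast
  moreover have "(v,v) \<notin> R" using irrR by blast
  ultimately have "E' \<inter> ({v} \<times> {v}) = {}" "R \<inter> ({v} \<times> {v}) = {}" by auto
  then show ?case unfolding Good_def using c tv by simp
next
  case (DUnion f g)
  have wfs: "cw_wf (DUnion f g)" using ModD(1)[OF DUnion.prems] .
  have Mf: "Mod k V0 E0 A0 f" by (rule Mod_child[OF DUnion.prems CF_DUnion1[OF wfs]])
  have Mg: "Mod k V0 E0 A0 g" by (rule Mod_child[OF DUnion.prems CF_DUnion2[OF wfs]])
  show ?case unfolding T.simps
    by (rule union_good[OF inj rng hR hE symE DUnion.prems DUnion.IH(1)[OF Mf] DUnion.IH(2)[OF Mg]])
next
  case (Eta i j f)
  have wfs: "cw_wf (Eta i j f)" using ModD(1)[OF Eta.prems] .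
  have Mf: "Mod k V0 E0 A0 f" by (rule Mod_child[OF Eta.prems CF_Eta[OF wfs]])
  show ?case unfolding T.simps
    by (rule unary_good[OF inj rng Eta.prems Mf _ _ Eta.IH[OF Mf]]) (simp, simp only: tau_Eta)
next
  case (Alpha i j f)
  have wfs: "cw_wf (Alpha i j f)" using ModD(1)[OF Alpha.prems] .
  have Mf: "Mod k V0 E0 A0 f" by (rule Mod_child[OF Alpha.prems CF_Alpha[OF wfs]])
  show ?case unfolding T.simps
    by (rule unary_good[OF inj rng Alpha.prems Mf _ _ Alpha.IH[OF Mf]]) (simp, rule tau_Alpha)
next
  case (Rho i j f)
  have wfs: "cw_wf (Rho i j f)" using ModD(1)[OF Rho.prems] .
  have Mf: "Mod k V0 E0 A0 f" by (rule Mod_child[OF Rho.prems CF_Rho[OF wfs]])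
  show ?case unfolding T.simps
    by (rule unary_good[OF inj rng Rho.prems Mf _ _ Rho.IH[OF Mf]]) (simp, rule tau_Rho)
qed

lemma pairs_bound: "(\<And>a b. (a,b) \<in> set L \<Longrightarrow> a < n \<and> b < n) \<Longrightarrow> fst ` set L \<subseteq> {..<n} \<and> snd ` set L \<subseteq> {..<n}"
  by force

fun buildv :: "('a \<Rightarrow> nat) \<Rightarrow> 'a list \<Rightarrow> 'a cwexp" where
  "buildv h [] = Vtx undefined 0"
| "buildv h [x] = Vtx x (h x)"
| "buildv h (x#y#zs) = DUnion (Vtx x (h x)) (buildv h (y#zs))"

lemma buildv_props:
  "xs \<noteq> [] \<Longrightarrow> distinct xs \<Longrightarrow> evV (buildv h xs) = set xs \<and> evE (buildv h xs) = {} \<and> evA (buildv h xs) = {}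
    \<and> (\<forall>x\<in>set xs. evl (buildv h xs) x = h x) \<and> cw_wf (buildv h xs) \<and> cw_labels (buildv h xs) = h ` set xs"
  by (induction h xs rule: buildv.induct) auto

lemma exists_expr:
  assumes G: "acyclic_simple_mgraph G" and ne: "verts G \<noteq> {}"
  shows "\<exists>e. cw_wf e \<and> cw_labels e \<subseteq> {..<card (verts G)} \<and> cw_graph e = G"
proof -
  let ?V = "verts G" let ?E = "edges G" let ?A = "arcs G"
  have fin: "finite ?V" and EV: "?E \<subseteq> ?V \<times> ?V" and AV: "?A \<subseteq> ?V \<times> ?V" and symE: "sym ?E"
    and irrE: "\<forall>x. (x,x) \<notin> ?E" and acyc: "acyclic ?A"
    using G unfolding acyclic_simple_mgraph_def by blast+
  obtain xs where xs: "set xs = ?V" "distinct xs" using finite_distinct_list[OF fin] by blast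
  have xsne: "xs \<noteq> []" using xs ne by auto
  obtain h where h: "bij_betw h ?V {0..<card ?V}" using ex_bij_betw_finite_nat[OF fin] by blast
  have hinj: "inj_on h ?V" using h bij_betw_def by blast
  have hr: "\<And>x. x \<in> ?V \<Longrightarrow> h x < card ?V" using h bij_betwE by fastforce
  have finA: "finite ?A" using AV fin by (meson finite_SigmaI finite_subset)
  have finE: "finite ?E" using EV fin by (meson finite_SigmaI finite_subset)
  obtain as where as: "set as = ?A" using finite_list[OF finA] by blast
  obtain es where es: "set es = ?E" using finite_list[OF finE] by blast
  let ?LA = "map (\<lambda>(x,y). (h x, h y)) as"
  let ?LE = "map (\<lambda>(x,y). (h x, h y)) es"
  let ?B = "buildv h xs"
  let ?e = "etas ?LE (alphas ?LA ?B)"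
  have B: "evV ?B = ?V" "evE ?B = {}" "evA ?B = {}" "\<And>x. x\<in>?V \<Longrightarrow> evl ?B x = h x" "cw_wf ?B" "cw_labels ?B = h ` ?V"
    using buildv_props[OF xsne xs(2), of h] xs(1) by auto
  have irrA: "\<And>x. (x,x) \<notin> ?A" using acyc unfolding acyclic_def by blast
  have mA: "(h x, h y) \<in> set ?LA \<longleftrightarrow> (x,y) \<in> ?A" if "x \<in> ?V" "y \<in> ?V" for x y
  proof
    assume "(h x, h y) \<in> set ?LA"
    then obtain x' y' where h1: "(x',y') \<in> ?A" "h x' = h x" "h y' = h y" using as by auto
    then have "x' \<in> ?V" "y' \<in> ?V" using AV by auto
    then have "x' = x" "y' = y" using inj_onD[OF hinj h1(2)] inj_onD[OF hinj h1(3)] that by auto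
    then show "(x,y) \<in> ?A" using h1 by simp
  next
    assume "(x,y) \<in> ?A" then show "(h x, h y) \<in> set ?LA" using as by force
  qed
  have mE: "(h x, h y) \<in> set ?LE \<longleftrightarrow> (x,y) \<in> ?E" if "x \<in> ?V" "y \<in> ?V" for x y
  proof
    assume "(h x, h y) \<in> set ?LE"
    then obtain x' y' where h1: "(x',y') \<in> ?E" "h x' = h x" "h y' = h y" using es by auto
    then have "x' \<in> ?V" "y' \<in> ?V" using EV by auto
    then have "x' = x" "y' = y" using inj_onD[OF hinj h1(2)] inj_onD[OF hinj h1(3)] that by auto
    then show "(x,y) \<in> ?E" using h1 by simp
  next
    assume "(x,y) \<in> ?E" then show "(h x, h y) \<in> set ?LE" using es by force
  qed
  have eA: "evA ?e = ?A"
  proof -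
    have "evA ?e = {(x,y). x \<in> ?V \<and> y \<in> ?V \<and> (evl ?B x, evl ?B y) \<in> set ?LA}" using B(1,3) by simp
    also have "\<dots> = {(x,y). x \<in> ?V \<and> y \<in> ?V \<and> (h x, h y) \<in> set ?LA}" using B(4) by auto
    also have "\<dots> = ?A"
    proof (rule set_eqI)
      fix p show "p \<in> {(x,y). x \<in> ?V \<and> y \<in> ?V \<and> (h x, h y) \<in> set ?LA} \<longleftrightarrow> p \<in> ?A"
      proof (cases p)
        case (Pair x y)
        show ?thesis
        proof (cases "x \<in> ?V \<and> y \<in> ?V")
          case True then show ?thesis unfolding Pair using mA[of x y] by simp
        next
          case False then show ?thesis unfolding Pair using AV by auto
        qed
      qed
    qed
    finally show ?thesis .
  qed
  have eE: "evE ?e = ?E"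
  proof -
    have "evE ?e = {(x,y). x \<in> ?V \<and> y \<in> ?V \<and> ((evl ?B x, evl ?B y) \<in> set ?LE \<or> (evl ?B y, evl ?B x) \<in> set ?LE)}" using B(1,2) by simp
    also have "\<dots> = {(x,y). x \<in> ?V \<and> y \<in> ?V \<and> ((h x, h y) \<in> set ?LE \<or> (h y, h x) \<in> set ?LE)}" using B(4) by auto
    also have "\<dots> = ?E"
    proof (rule set_eqI)
      fix p show "p \<in> {(x,y). x \<in> ?V \<and> y \<in> ?V \<and> ((h x, h y) \<in> set ?LE \<or> (h y, h x) \<in> set ?LE)} \<longleftrightarrow> p \<in> ?E"
      proof (cases p)
        case (Pair x y)
        show ?thesis
        proof (cases "x \<in> ?V \<and> y \<in> ?V")
          case True
          have "(y,x) \<in> ?E \<longleftrightarrow> (x,y) \<in> ?E" using symE unfolding sym_def by blast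
          then show ?thesis unfolding Pair using mE[of x y] mE[of y x] True by simp
        next
          case False then show ?thesis unfolding Pair using EV by auto
        qed
      qed
    qed
    finally show ?thesis .
  qed
  have wf: "cw_wf ?e"
  proof -
    have "\<forall>(i,j)\<in>set ?LA. i \<noteq> j"
    proof
      fix p assume "p \<in> set ?LA"
      then obtain x y where "(x,y) \<in> ?A" "p = (h x, h y)" using as by auto
      moreover then have "x \<in> ?V" "y \<in> ?V" "x \<noteq> y" using AV irrA by auto
      ultimately show "case p of (i,j) \<Rightarrow> i \<noteq> j" using hinj by (simp add: inj_on_eq_iff)
    qed
    moreover have "\<forall>(i,j)\<in>set ?LE. i \<noteq> j"
    proof
      fix p assume "p \<in> set ?LE"
      then obtain x y where "(x,y) \<in> ?E" "p = (h x, h y)" using es by auto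
      moreover then have "x \<in> ?V" "y \<in> ?V" "x \<noteq> y" using EV irrE by auto
      ultimately show "case p of (i,j) \<Rightarrow> i \<noteq> j" using hinj by (simp add: inj_on_eq_iff)
    qed
    ultimately show ?thesis using B(5) by (simp add: wf_etas wf_alphas)
  qed
  have lab: "cw_labels ?e \<subseteq> {..<card ?V}"
  proof -
    have pA: "a < card ?V \<and> b < card ?V" if ab: "(a,b) \<in> set ?LA" for a b
    proof -
      obtain x y where "(x,y) \<in> ?A" "a = h x" "b = h y" using ab as by auto
      then show ?thesis using AV hr by blast
    qed
    have pE: "a < card ?V \<and> b < card ?V" if ab: "(a,b) \<in> set ?LE" for a b
    proof -
      obtain x y where "(x,y) \<in> ?E" "a = h x" "b = h y" using ab es by auto
      then show ?thesis using EV hr by blast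
    qed
    have 1: "fst ` set ?LA \<subseteq> {..<card ?V} \<and> snd ` set ?LA \<subseteq> {..<card ?V}"
      by (rule pairs_bound) (rule pA)
    have 2: "fst ` set ?LE \<subseteq> {..<card ?V} \<and> snd ` set ?LE \<subseteq> {..<card ?V}"
      by (rule pairs_bound) (rule pE)
    have 3: "cw_labels ?B \<subseteq> {..<card ?V}" unfolding B(6) using hr by blast
    have "cw_labels ?e = cw_labels ?B \<union> fst ` set ?LA \<union> snd ` set ?LA \<union> fst ` set ?LE \<union> snd ` set ?LE"
      unfolding labels_etas labels_alphas by blast
    then show ?thesis using 1 2 3 by (simp only: Un_subset_iff)
  qed
  have "cw_graph ?e = G" unfolding cw_graph_ev using eA eE B(1)
    by (simp add: verts_def edges_def arcs_def)
  then show ?thesis using wf lab by blast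
qed


lemma smt_trans:
  assumes symE: "sym (edges H)" and irr: "\<forall>x. (x,x) \<notin> edges H"
    and h1: "same_mixed_type H u v" and h2: "same_mixed_type H v w"
  shows "same_mixed_type H u w"
proof -
  let ?N = "Nu H"
  have s: "\<And>x y. x \<in> ?N y \<longleftrightarrow> y \<in> ?N x" using symE unfolding sym_def Nu_def by blast
  have ir: "\<And>x. x \<notin> ?N x" using irr unfolding Nu_def by blast
  have e1: "?N u - {v} = ?N v - {u}" and e2: "?N v - {w} = ?N w - {v}" using h1 h2 unfolding same_mixed_type_def by blast+
  have io: "Nin H u = Nin H w" "Nout H u = Nout H w" using h1 h2 unfolding same_mixed_type_def by simp_all
  have "?N u - {w} = ?N w - {u}"
  proof (cases "u = w \<or> u = v \<or> v = w")
    case True then show ?thesis using e1 e2 by auto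
  next
    case False
    then have d: "u \<noteq> w" "u \<noteq> v" "v \<noteq> w" by auto
    show ?thesis
    proof (rule set_eqI)
      fix x
      show "x \<in> ?N u - {w} \<longleftrightarrow> x \<in> ?N w - {u}"
      proof (cases "x = u \<or> x = w")
        case True then show ?thesis using ir by auto
      next
        case False
        then have xuw: "x \<noteq> u" "x \<noteq> w" by auto
        show ?thesis
        proof (cases "x = v")
          case False
          have "x \<in> ?N u \<longleftrightarrow> x \<in> ?N v" using e1 xuw False by blast
          also have "\<dots> \<longleftrightarrow> x \<in> ?N w" using e2 xuw False by blast
          finally show ?thesis using xuw by blast
        next
          case True
          have "v \<in> ?N u \<longleftrightarrow> u \<in> ?N v" by (rule s)
          also have "\<dots> \<longleftrightarrow> u \<in> ?N w" using e2 d by blast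
          also have "\<dots> \<longleftrightarrow> w \<in> ?N u" by (rule s)
          also have "\<dots> \<longleftrightarrow> w \<in> ?N v" using e1 d by blast
          also have "\<dots> \<longleftrightarrow> v \<in> ?N w" by (rule s)
          finally show ?thesis using True xuw by blast
        qed
      qed
    qed
  qed
  then show ?thesis using io unfolding same_mixed_type_def by blast
qed

lemma quotient_card_mono:
  assumes fin: "finite V" and r1: "r1 \<subseteq> V \<times> V" and refl1: "\<And>x. x \<in> V \<Longrightarrow> (x,x) \<in> r1"
    and tr: "trans r2" and sub: "r1 \<subseteq> r2"
  shows "card (V // r2) \<le> card (V // r1)"
proof -
  have e: "\<And>x. x \<in> V \<Longrightarrow> r2 `` (r1 `` {x}) = r2 `` {x}"
  proof -
    fix x assume x: "x \<in> V"
    show "r2 `` (r1 `` {x}) = r2 `` {x}"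
    proof
      show "r2 `` (r1 `` {x}) \<subseteq> r2 `` {x}" using sub tr unfolding trans_def by blast
      show "r2 `` {x} \<subseteq> r2 `` (r1 `` {x})" using refl1[OF x] by blast
    qed
  qed
  have "V // r2 = (\<lambda>X. r2 `` X) ` (V // r1)"
    unfolding quotient_def using e by auto
  then have "card (V // r2) = card ((\<lambda>X. r2 `` X) ` (V // r1))" by simp
  also have "\<dots> \<le> card (V // r1)" by (rule card_image_le[OF finite_quotient[OF fin r1]])
  finally show ?thesis .
qed

lemma nd_part:
  assumes G: "acyclic_simple_mgraph G"
  shows "nd_m (mtrancl G) \<le> nd_m G"
proof -
  let ?V = "verts G" let ?E = "edges G" let ?A = "arcs G" let ?H = "mtrancl G"
  have fin: "finite ?V" and symE: "sym ?E" and irrE: "\<forall>x. (x,x) \<notin> ?E"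
    using G unfolding acyclic_simple_mgraph_def by blast+
  have H: "verts ?H = ?V" "edges ?H = ?E - (?A\<^sup>+ \<union> (?A\<^sup>+)\<inverse>)" "arcs ?H = ?A\<^sup>+"
    unfolding mtrancl_def verts_def edges_def arcs_def by simp_all
  have symH: "sym (edges ?H)" using symE unfolding H sym_def by blast
  have irrH: "\<forall>x. (x,x) \<notin> edges ?H" using irrE unfolding H by blast
  have sub: "type_rel G \<subseteq> type_rel ?H"
  proof
    fix p assume p: "p \<in> type_rel G"
    obtain u v where pu: "p = (u,v)" by (cases p)
    have uv: "u \<in> ?V" "v \<in> ?V" and st: "same_mixed_type G u v" using p unfolding pu type_rel_def by auto
    have eN: "Nu G u - {v} = Nu G v - {u}" and eI: "Nin G u = Nin G v" and eO: "Nout G u = Nout G v"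
      using st unfolding same_mixed_type_def by blast+
    have o: "(u,x) \<in> ?A \<longleftrightarrow> (v,x) \<in> ?A" for x using eO unfolding Nout_def by blast
    have i: "(x,u) \<in> ?A \<longleftrightarrow> (x,v) \<in> ?A" for x using eI unfolding Nin_def by blast
    have o2: "(u,x) \<in> ?A\<^sup>+ \<longleftrightarrow> (v,x) \<in> ?A\<^sup>+" for x
      unfolding trancl_unfold_left relcomp_unfold using o by blast
    have i2: "(x,u) \<in> ?A\<^sup>+ \<longleftrightarrow> (x,v) \<in> ?A\<^sup>+" for x
      unfolding trancl_unfold_right relcomp_unfold using i by blast
    have n: "(u,x) \<in> ?E \<longleftrightarrow> (v,x) \<in> ?E" if "x \<noteq> u" "x \<noteq> v" for x
      using eN that unfolding Nu_def by blast
    have "Nu ?H u - {v} = Nu ?H v - {u}"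
    proof (rule set_eqI)
      fix x show "x \<in> Nu ?H u - {v} \<longleftrightarrow> x \<in> Nu ?H v - {u}"
      proof (cases "x = u \<or> x = v")
        case True then show ?thesis using irrH unfolding Nu_def by auto
      next
        case False
        then show ?thesis unfolding Nu_def H using n[of x] o2[of x] i2[of x] by auto
      qed
    qed
    moreover have "Nin ?H u = Nin ?H v" unfolding Nin_def H using i2 by blast
    moreover have "Nout ?H u = Nout ?H v" unfolding Nout_def H using o2 by blast
    ultimately have "same_mixed_type ?H u v" unfolding same_mixed_type_def by blast
    then show "p \<in> type_rel ?H" unfolding pu type_rel_def using uv H(1) by simp
  qed
  have r1: "type_rel G \<subseteq> ?V \<times> ?V" unfolding type_rel_def by auto
  have refl1: "\<And>x. x \<in> ?V \<Longrightarrow> (x,x) \<in> type_rel G" unfolding type_rel_def same_mixed_type_def by simp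
  have tr: "trans (type_rel ?H)"
    unfolding trans_def type_rel_def using smt_trans[OF symH irrH] by blast
  have "card (?V // type_rel ?H) \<le> card (?V // type_rel G)"
    by (rule quotient_card_mono[OF fin r1 refl1 tr sub])
  then show ?thesis unfolding nd_m_def H(1) .
qed


lemma mgraph_eq: "G = (verts G, edges G, arcs G)"
  unfolding verts_def edges_def arcs_def by simp

lemma le_pow4: "(n::nat) \<le> 4 ^ n * n"
proof (cases n)
  case 0 then show ?thesis by simp
next
  case (Suc m)
  have "1 \<le> (4::nat) ^ n" by simp
  then show ?thesis by simp
qed

theorem mainTheorem18:
  fixes G :: "'a mgraph"
  assumes "acyclic_simple_mgraph G"
  shows "nd_m (mtrancl G) \<le> nd_m G \<and> cw_m (mtrancl G) \<le> 4 ^ cw_m G * cw_m G"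
proof
  show "nd_m (mtrancl G) \<le> nd_m G" by (rule nd_part[OF assms])
next
  let ?V = "verts G" let ?E = "edges G" let ?A = "arcs G"
  have fin: "finite ?V" and EV: "?E \<subseteq> ?V \<times> ?V" and AV: "?A \<subseteq> ?V \<times> ?V" and symE: "sym ?E"
    and irrE: "\<forall>x. (x,x) \<notin> ?E" and acyc: "acyclic ?A"
    using assms unfolding acyclic_simple_mgraph_def by blast+
  show "cw_m (mtrancl G) \<le> 4 ^ cw_m G * cw_m G"
  proof (cases "?V = {}")
    case True
    have "?E = {}" "?A = {}" using EV AV True by auto
    then have "mtrancl G = G" unfolding mtrancl_def using mgraph_eq[of G] by simp
    then show ?thesis using le_pow4 by simp
  next
    case False
    let ?P = "\<lambda>k. \<exists>e. cw_wf e \<and> cw_labels e \<subseteq> {..<k} \<and> cw_graph e = G"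
    define k where "k = cw_m G"
    have "?P (card ?V)" using exists_expr[OF assms False] .
    then have "?P k" unfolding k_def cw_m_def by (rule LeastI_ex[where P = ?P, OF exI])
    then obtain e0 where e0: "cw_wf e0" "cw_labels e0 \<subseteq> {..<k}" "cw_graph e0 = G" by blast
    have ev: "evV e0 = ?V" "evE e0 = ?E" "evA e0 = ?A"
      using e0(3) unfolding cw_graph_ev verts_def edges_def arcs_def by auto
    have Md: "Mod k ?V ?E ?A e0" using Mod_root[OF e0(1) e0(2)] unfolding ev .
    define M where "M = card (Tset k)"
    obtain cd where cd: "bij_betw cd (Tset k) {0..<M}" using ex_bij_betw_finite_nat[OF finite_Tset] unfolding M_def by blast
    have inj: "inj_on cd (Tset k)" using cd bij_betw_def by blast
    have rng: "\<forall>t\<in>Tset k. cd t < M" using cd bij_betwE by fastforce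
    define R where "R = ?A\<^sup>+"
    define E' where "E' = ?E - (R \<union> R\<inverse>)"
    have irrR: "\<forall>v. (v,v) \<notin> R" using acyc unfolding R_def acyclic_def by blast
    have Gd: "Good M cd R E' e0 (T M cd R E' e0)"
      by (rule T_good[OF inj rng R_def E'_def symE irrE irrR Md])
    have RV: "R \<subseteq> ?V \<times> ?V" unfolding R_def by (rule trancl_subset_Sigma[OF AV])
    have E'V: "E' \<subseteq> ?V \<times> ?V" unfolding E'_def using EV by blast
    have "cw_graph (T M cd R E' e0) = (?V, E', R)"
      using Gd unfolding Good_def cw_graph_ev ev using RV E'V by auto
    also have "\<dots> = mtrancl G" unfolding mtrancl_def R_def E'_def by simp
    finally have gT: "cw_graph (T M cd R E' e0) = mtrancl G" .
    have wfT: "cw_wf (T M cd R E' e0)" "cw_labels (T M cd R E' e0) \<subseteq> {..<2*M}" using Gd unfolding Good_def by simp_all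
    have "cw_m (mtrancl G) \<le> 2 * M" unfolding cw_m_def
      by (rule Least_le) (use wfT gT in blast)
    also have "\<dots> \<le> 4 ^ k * k" unfolding M_def by (rule card_Tset_bound)
    finally show ?thesis unfolding k_def .
  qed
qed


end
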